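(* Let $\hat\mu\in\mathbb{C}\setminus\{0\}$. If $(\hat\mu,\hat\phi)$ with $\hat\phi\in X\setminus\{0\}$ satisfies $\mathscr{U}\hat\phi=\hat\mu\hat\phi$, then $\mathcal{N}(\hat\mu)\hat{\bm v}=0$, where $\hat{\bm v}=(v_1^{\mathrm T}\,\cdots\,v_N^{\mathrm T})^{\mathrm T}\in\mathbb{C}^{Nd}$ is given by $v_n=x((n-1)\Delta;0,\hat\phi)$, $n=1,\ldots,N$. Conversely, if $\hat{\bm v}\in\mathbb{C}^{Nd}\setminus\{0\}$ satisfies $\mathcal{N}(\hat\mu)\hat{\bm v}=0$, then $\mathscr{U}\hat\phi=\hat\mu\hat\phi$, where \[ \hat\phi(t)=\hat\mu^{\lfloor (n-1)/N\rfloor}\,q_{((n-1)\bmod N)+1}\Big(\frac{t}{\Delta}-(n-1)\Big),\quad t\in((n-1)\Delta,n\Delta],\ n=-n_h+1,\ldots,0, \] and $\bm q(s)=(q_1^{\mathrm T}(s)\,\cdots\,q_N^{\mathrm T}(s))^{\mathrm T}$ is the solution of $\dot{\bm q}(s)=A(s,\hat\mu)\bm q(s)$, $s\in[0,1]$, $\bm q(0)=\hat{\bm v}$.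
   Context: Consider $\dot{x}(t)=\sum_{j=0}^h A_j(t)x(t-\tau_j)$ with $x(t)\in\mathbb{R}^d$, $A_j:\mathbb{R}\to\mathbb{R}^{d\times d}$ smooth and $T$-periodic ($T>0$), $0=\tau_0\le\tau_1<\cdots<\tau_h$, and $\Delta>0$, integers $N,n_j$ with $T=N\Delta$, $\tau_j=n_j\Delta$ ($n_0=0$). Let $X=C([-\tau_h,0],\mathbb{C}^d)$; $x(t;t_0,\phi)$ is the solution with initial function $\phi\in X$ at time $t_0$ (i.e. $x(t)=\phi(t-t_0)$ on $[t_0-\tau_h,t_0]$), and the monodromy operator is $\mathscr{U}\phi=x_T(\cdot;0,\phi)$, where $x_t(\theta;t_0,\phi)=x(t+\theta;t_0,\phi)$, $\theta\in[-\tau_h,0]$. For $\mu\neq0$ define the $Nd\times Nd$ matrix-valued function $A(s,\mu)$ by: for $\bm q=(q_1^{\mathrm T},\ldots,q_N^{\mathrm T})^{\mathrm T}$, the $n$-th block of $A(s,\mu)\bm q$ is $\Delta\sum_{j=0}^h A_j((s+n-1)\Delta)\mu^{a_{n-n_j}}q_{b_{n-n_j}}$, where $a_k=\lfloor (k-1)/N\rfloor$, $b_k=((k-1)\bmod N)+1$. Let $B(\mu)=\begin{pmatrix}0&I_{N-1}\\ \mu&0\end{pmatrix}\otimes I_d$. The characteristic matrix $\mathcal N(\mu)\in\mathbb{C}^{Nd\times Nd}$ is defined by $\mathcal N(\mu)\bm v=\bm q(1)-B(\mu)\bm v$, where $\bm q$ solves $\dot{\bm q}(s)=A(s,\mu)\bm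 q(s)$, $s\in[0,1]$, $\bm q(0)=\bm v$. *)

theory Defs
  imports "HOL-Analysis.Analysis"
begin

definition smooth_fun :: "(real \<Rightarrow> 'a::real_normed_vector) \<Rightarrow> bool" where
  "smooth_fun f \<longleftrightarrow> (\<exists>D. D 0 = f \<and> (\<forall>k t. (D k has_vector_derivative D (Suc k) t) (at t)))"

definition cmat :: "real^'d^'d \<Rightarrow> complex^'d^'d" where
  "cmat M = (\<chi> i k. complex_of_real (M $ i $ k))"

definition tau :: "(nat \<Rightarrow> nat) \<Rightarrow> real \<Rightarrow> nat \<Rightarrow> real" where
  "tau ns \<Delta> j = real (ns j) * \<Delta>"

definition dde_sol :: "(nat \<Rightarrow> real \<Rightarrow> real^'d^'d) \<Rightarrow> (nat \<Rightarrow> nat) \<Rightarrow> nat \<Rightarrow> real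
    \<Rightarrow> real \<Rightarrow> (real \<Rightarrow> complex^'d) \<Rightarrow> (real \<Rightarrow> complex^'d) \<Rightarrow> bool" where
  "dde_sol A ns h \<Delta> t0 \<phi> x \<longleftrightarrow>
     continuous_on {t0 - tau ns \<Delta> h..} x \<and>
     (\<forall>t\<in>{t0 - tau ns \<Delta> h..t0}. x t = \<phi> (t - t0)) \<and>
     (\<forall>t\<ge>t0. (x has_vector_derivative
        (\<Sum>j\<le>h. cmat (A j t) *v x (t - tau ns \<Delta> j))) (at t within {t0..}))"

definition dde_x :: "(nat \<Rightarrow> real \<Rightarrow> real^'d^'d) \<Rightarrow> (nat \<Rightarrow> nat) \<Rightarrow> nat \<Rightarrow> real
    \<Rightarrow> real \<Rightarrow> (real \<Rightarrow> complex^'d) \<Rightarrow> real \<Rightarrow> complex^'d" where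
  "dde_x A ns h \<Delta> t0 \<phi> t = (THE y. \<exists>x. dde_sol A ns h \<Delta> t0 \<phi> x \<and> x t = y)"

definition a_idx :: "nat \<Rightarrow> int \<Rightarrow> int" where
  "a_idx N k = (k - 1) div int N"

definition b_idx :: "nat \<Rightarrow> int \<Rightarrow> nat" where
  "b_idx N k = nat ((k - 1) mod int N) + 1"

text \<open>Block vectors in C^{Nd} are represented as q :: nat => complex^'d, blocks q_1..q_N.
  n-th block of A(s,mu) q.\<close>
definition Amul :: "(nat \<Rightarrow> real \<Rightarrow> real^'d^'d) \<Rightarrow> (nat \<Rightarrow> nat) \<Rightarrow> nat \<Rightarrow> real \<Rightarrow> nat
    \<Rightarrow> complex \<Rightarrow> real \<Rightarrow> (nat \<Rightarrow> complex^'d) \<Rightarrow> nat \<Rightarrow> complex^'d" where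
  "Amul A ns h \<Delta> N \<mu> s q n =
     complex_of_real \<Delta> *s (\<Sum>j\<le>h. cmat (A j ((s + real n - 1) * \<Delta>)) *v
        ((\<mu> powi a_idx N (int n - int (ns j))) *s q (b_idx N (int n - int (ns j)))))"

definition ode_sol :: "(nat \<Rightarrow> real \<Rightarrow> real^'d^'d) \<Rightarrow> (nat \<Rightarrow> nat) \<Rightarrow> nat \<Rightarrow> real \<Rightarrow> nat
    \<Rightarrow> complex \<Rightarrow> (nat \<Rightarrow> complex^'d) \<Rightarrow> (nat \<Rightarrow> real \<Rightarrow> complex^'d) \<Rightarrow> bool" where
  "ode_sol A ns h \<Delta> N \<mu> v q \<longleftrightarrow>
     (\<forall>n\<in>{1..N}. q n 0 = v n \<and>
        (\<forall>s\<in>{0..1}. (q n has_vector_derivative Amul A ns h \<Delta> N \<mu> s (\<lambda>m. q m s) n)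
                        (at s within {0..1})))"

definition ode_q :: "(nat \<Rightarrow> real \<Rightarrow> real^'d^'d) \<Rightarrow> (nat \<Rightarrow> nat) \<Rightarrow> nat \<Rightarrow> real \<Rightarrow> nat
    \<Rightarrow> complex \<Rightarrow> (nat \<Rightarrow> complex^'d) \<Rightarrow> nat \<Rightarrow> real \<Rightarrow> complex^'d" where
  "ode_q A ns h \<Delta> N \<mu> v n s = (THE y. \<exists>q. ode_sol A ns h \<Delta> N \<mu> v q \<and> q n s = y)"

text \<open>n-th block of B(mu) v, B(mu) = [[0, I_{N-1}],[mu, 0]] (x) I_d.\<close>
definition Bmul :: "nat \<Rightarrow> complex \<Rightarrow> (nat \<Rightarrow> complex^'d) \<Rightarrow> nat \<Rightarrow> complex^'d" where
  "Bmul N \<mu> v n = (if n < N then v (Suc n) else \<mu> *s v 1)"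

definition charN :: "(nat \<Rightarrow> real \<Rightarrow> real^'d^'d) \<Rightarrow> (nat \<Rightarrow> nat) \<Rightarrow> nat \<Rightarrow> real \<Rightarrow> nat
    \<Rightarrow> complex \<Rightarrow> (nat \<Rightarrow> complex^'d) \<Rightarrow> nat \<Rightarrow> complex^'d" where
  "charN A ns h \<Delta> N \<mu> v n = ode_q A ns h \<Delta> N \<mu> v n 1 - Bmul N \<mu> v n"

text \<open>The eigenfunction built from v:
  phi(t) = mu^{a_n} q_{b_n}(t/Delta - (n-1)) for t in ((n-1)Delta, n Delta], n = -n_h+1..0;
  at the left endpoint t = -tau_h the formula for n = -n_h+1 (continuous extension) is used.\<close>
definition phi_hat :: "(nat \<Rightarrow> real \<Rightarrow> real^'d^'d) \<Rightarrow> (nat \<Rightarrow> nat) \<Rightarrow> nat \<Rightarrow> real \<Rightarrow> nat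
    \<Rightarrow> complex \<Rightarrow> (nat \<Rightarrow> complex^'d) \<Rightarrow> real \<Rightarrow> complex^'d" where
  "phi_hat A ns h \<Delta> N \<mu> v t =
     (let n = (if t = - tau ns \<Delta> h then 1 - int (ns h) else \<lceil>t / \<Delta>\<rceil>)
      in (\<mu> powi a_idx N n) *s ode_q A ns h \<Delta> N \<mu> v (b_idx N n) (t / \<Delta> - real_of_int (n - 1)))"

end

theory Submission
  imports Defs
begin


lemma poly_has_integral:
  fixes a t c :: real
  assumes "a \<le> t"
  shows "((\<lambda>s. c * (s - a)^k / fact k) has_integral c * (t - a)^(Suc k) / fact (Suc k)) {a..t}"
proof -
  have "((\<lambda>s. c * (s - a)^k / fact k) has_integral
        (c * (t - a)^(Suc k) / fact (Suc k) - c * (a - a)^(Suc k) / fact (Suc k))) {a..t}"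
  proof (rule fundamental_theorem_of_calculus[OF assms])
    fix x assume "x \<in> {a..t}"
    have "((\<lambda>s. c * (s - a)^(Suc k) / fact (Suc k)) has_real_derivative
            c * (real (Suc k) * (x - a)^k) / fact (Suc k)) (at x within {a..t})"
      by (rule derivative_eq_intros refl | simp)+
    moreover have "c * (real (Suc k) * (x - a)^k) / fact (Suc k) = c * (x - a)^k / fact k"
      by (simp add: fact_Suc field_simps del: of_nat_Suc)
    ultimately show "((\<lambda>s. c * (s - a)^(Suc k) / fact (Suc k)) has_vector_derivative
            c * (x - a)^k / fact k) (at x within {a..t})"
      by (simp add: has_real_derivative_iff_has_vector_derivative)
  qed
  then show ?thesis by simp
qed

lemma pow_fact_tendsto_zero:
  fixes x :: real
  shows "(\<lambda>k. x^k / fact k) \<longlonglongrightarrow> 0"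
proof -
  have "summable (\<lambda>n. inverse (fact n) *\<^sub>R x^n)" by (rule summable_exp_generic)
  then have "(\<lambda>n. inverse (fact n) *\<^sub>R x^n) \<longlonglongrightarrow> 0" by (rule summable_LIMSEQ_zero)
  then show ?thesis by (simp add: divide_inverse mult.commute)
qed

lemma summable_pow_fact:
  fixes x :: real
  shows "summable (\<lambda>k. x^k / fact k)"
  using summable_exp_generic[of x] by (simp add: divide_inverse mult.commute)

lemma hvd_Un:
  assumes "(f has_vector_derivative f') (at x within S)"
    and "(f has_vector_derivative f') (at x within T)"
  shows "(f has_vector_derivative f') (at x within (S \<union> T))"
  using assms unfolding has_vector_derivative_def has_derivative_within
  by (auto intro: Lim_Un)

lemma bounded_family:
  fixes z :: "'i \<Rightarrow> real \<Rightarrow> 'a::real_normed_vector"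
  assumes "finite I" "\<And>i. i \<in> I \<Longrightarrow> continuous_on {a..b} (z i)"
  obtains M where "M \<ge> 0" "\<And>i t. i \<in> I \<Longrightarrow> t \<in> {a..b} \<Longrightarrow> norm (z i t) \<le> M"
proof -
  have "bounded (\<Union>i\<in>I. z i ` {a..b})"
    using assms by (intro bounded_UN) (auto intro!: compact_imp_bounded compact_continuous_image)
  then obtain M where M: "\<And>y. y \<in> (\<Union>i\<in>I. z i ` {a..b}) \<Longrightarrow> norm y \<le> M"
    unfolding bounded_iff by blast
  show ?thesis
    by (rule that[of "max M 0"]) (use M in force)+
qed

lemma GU:
  fixes z :: "'i \<Rightarrow> real \<Rightarrow> 'a::banach"
  assumes I: "finite I" and ab: "a \<le> b" and L: "L \<ge> 0"
    and cont: "\<And>i. i \<in> I \<Longrightarrow> continuous_on {a..b} (z i)"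
    and z0: "\<And>i. i \<in> I \<Longrightarrow> z i a = 0"
    and der: "\<And>i t. i \<in> I \<Longrightarrow> t \<in> {a..b} \<Longrightarrow> (z i has_vector_derivative D i t) (at t within {a..b})"
    and bnd: "\<And>i t B. i \<in> I \<Longrightarrow> t \<in> {a..b} \<Longrightarrow>
                 (\<And>j u. j \<in> I \<Longrightarrow> u \<in> {a..t} \<Longrightarrow> norm (z j u) \<le> B) \<Longrightarrow> norm (D i t) \<le> L * B"
  shows "\<And>i t. i \<in> I \<Longrightarrow> t \<in> {a..b} \<Longrightarrow> z i t = 0"
proof -
  obtain M where M0: "M \<ge> 0" and M: "\<And>i t. i \<in> I \<Longrightarrow> t \<in> {a..b} \<Longrightarrow> norm (z i t) \<le> M"
    using bounded_family[where I=I and z=z and a=a and b=b, OF I cont] by blast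
  have ind: "\<forall>i\<in>I. \<forall>t\<in>{a..b}. norm (z i t) \<le> M * L^k * (t - a)^k / fact k" for k
  proof (induction k)
    case 0
    then show ?case using M by simp
  next
    case (Suc k)
    show ?case
    proof (intro ballI)
      fix i t assume i: "i \<in> I" and t: "t \<in> {a..b}"
      have sub: "{a..t} \<subseteq> {a..b}" using t by auto
      have "(D i has_integral (z i t - z i a)) {a..t}"
        using t by (intro fundamental_theorem_of_calculus)
          (auto intro: has_vector_derivative_within_subset[OF der[OF i] sub])
      then have intD: "D i integrable_on {a..t}" and valD: "integral {a..t} (D i) = z i t"
        using z0[OF i] by (auto simp: integral_unique)
      have pint: "((\<lambda>s. (L * M * L^k) * (s - a)^k / fact k) has_integral
                   (L * M * L^k) * (t - a)^(Suc k) / fact (Suc k)) {a..t}"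
        using t by (intro poly_has_integral) auto
      have "norm (integral {a..t} (D i)) \<le> integral {a..t} (\<lambda>s. (L * M * L^k) * (s - a)^k / fact k)"
      proof (rule integral_norm_bound_integral[OF intD])
        show "(\<lambda>s. (L * M * L^k) * (s - a)^k / fact k) integrable_on {a..t}"
          using pint by blast
        fix s assume s: "s \<in> {a..t}"
        have "norm (D i s) \<le> L * (M * L^k * (s - a)^k / fact k)"
        proof (rule bnd[OF i])
          show "s \<in> {a..b}" using s t by auto
          fix j u assume j: "j \<in> I" and u: "u \<in> {a..s}"
          have "norm (z j u) \<le> M * L^k * (u - a)^k / fact k"
            using Suc.IH j u s t by auto
          also have "\<dots> \<le> M * L^k * (s - a)^k / fact k"
            using u M0 L by (intro divide_right_mono mult_left_mono power_mono) auto
          finally show "norm (z j u) \<le> M * L^k * (s - a)^k / fact k" .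
        qed
        then show "norm (D i s) \<le> (L * M * L^k) * (s - a)^k / fact k"
          by (simp add: field_simps)
      qed
      also have "\<dots> = (L * M * L^k) * (t - a)^(Suc k) / fact (Suc k)"
        using pint by (rule integral_unique)
      finally show "norm (z i t) \<le> M * L^(Suc k) * (t - a)^(Suc k) / fact (Suc k)"
        using valD by (simp add: field_simps)
    qed
  qed
  fix i t assume i: "i \<in> I" and t: "t \<in> {a..b}"
  have lim: "(\<lambda>k. M * ((L * (t - a))^k / fact k)) \<longlonglongrightarrow> M * 0"
    by (intro tendsto_mult tendsto_const pow_fact_tendsto_zero)
  have "norm (z i t) \<le> M * 0"
  proof (rule tendsto_le[OF _ lim tendsto_const])
    show "\<forall>\<^sub>F k in sequentially. norm (z i t) \<le> M * ((L * (t - a))^k / fact k)"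
    proof (rule always_eventually, rule allI)
      fix k
      show "norm (z i t) \<le> M * ((L * (t - a))^k / fact k)"
        using ind[of k] i t by (simp add: power_mult_distrib mult.assoc)
    qed
  qed simp
  then show "z i t = 0" by simp
qed

lemma GEN:
  fixes \<Phi> :: "('i \<Rightarrow> real \<Rightarrow> 'a::banach) \<Rightarrow> 'i \<Rightarrow> real \<Rightarrow> 'a" and y0 :: "'i \<Rightarrow> 'a"
  assumes I: "finite I" and ab: "a \<le> b" and L: "L \<ge> 0"
    and cont: "\<And>y i. i \<in> I \<Longrightarrow> (\<And>j. j \<in> I \<Longrightarrow> continuous_on {a..b} (y j) \<and> y j a = y0 j)
                  \<Longrightarrow> continuous_on {a..b} (\<Phi> y i)"
    and lip: "\<And>y w i s B. i \<in> I \<Longrightarrow> s \<in> {a..b} \<Longrightarrow>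
                 (\<And>j u. j \<in> I \<Longrightarrow> u \<in> {a..s} \<Longrightarrow> norm (y j u - w j u) \<le> B) \<Longrightarrow>
                 norm (\<Phi> y i s - \<Phi> w i s) \<le> L * B"
  shows "\<exists>y. \<forall>i\<in>I. continuous_on {a..b} (y i) \<and> y i a = y0 i \<and>
             (\<forall>t\<in>{a..b}. (y i has_vector_derivative \<Phi> y i t) (at t within {a..b}))"
proof -
  define P where "P = rec_nat (\<lambda>i t. y0 i) (\<lambda>k yk i t. y0 i + integral {a..t} (\<Phi> yk i))"
  have P0: "P 0 = (\<lambda>i t. y0 i)" by (simp add: P_def)
  have PS: "P (Suc k) = (\<lambda>i t. y0 i + integral {a..t} (\<Phi> (P k) i))" for k by (simp add: P_def)
  have F1: "\<forall>j\<in>I. continuous_on {a..b} (P k j) \<and> P k j a = y0 j" for k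
  proof (induction k)
    case 0 then show ?case by (simp add: P0)
  next
    case (Suc k)
    show ?case
    proof
      fix j assume j: "j \<in> I"
      have "continuous_on {a..b} (\<Phi> (P k) j)" using cont[OF j] Suc.IH by blast
      then have "continuous_on {a..b} (\<lambda>t. integral {a..t} (\<Phi> (P k) j))"
        by (intro indefinite_integral_continuous_1 integrable_continuous_real)
      then show "continuous_on {a..b} (P (Suc k) j) \<and> P (Suc k) j a = y0 j"
        by (auto simp: PS intro!: continuous_intros)
    qed
  qed
  have intP: "\<And>k i t. i \<in> I \<Longrightarrow> t \<in> {a..b} \<Longrightarrow> \<Phi> (P k) i integrable_on {a..t}"
  proof -
    fix k i t assume i: "i \<in> I" and t: "t \<in> {a..b}"
    have "continuous_on {a..b} (\<Phi> (P k) i)" using cont[OF i] F1 by blast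
    then have "continuous_on {a..t} (\<Phi> (P k) i)"
      by (rule continuous_on_subset) (use t in auto)
    then show "\<Phi> (P k) i integrable_on {a..t}" by (rule integrable_continuous_real)
  qed
  obtain M where M0: "M \<ge> 0" and M: "\<And>i t. i \<in> I \<Longrightarrow> t \<in> {a..b} \<Longrightarrow> norm (P 1 i t - P 0 i t) \<le> M"
  proof (rule bounded_family[where I=I and z="\<lambda>i t. P 1 i t - P 0 i t" and a=a and b=b, OF I])
    fix i assume "i \<in> I"
    then show "continuous_on {a..b} (\<lambda>t. P 1 i t - P 0 i t)" using F1 by (intro continuous_on_diff) auto
  qed blast
  have F3: "\<forall>i\<in>I. \<forall>t\<in>{a..b}. norm (P (Suc k) i t - P k i t) \<le> M * L^k * (t - a)^k / fact k" for k
  proof (induction k)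
    case 0
    then show ?case using M by simp
  next
    case (Suc k)
    show ?case
    proof (intro ballI)
      fix i t assume i: "i \<in> I" and t: "t \<in> {a..b}"
      have eq: "P (Suc (Suc k)) i t - P (Suc k) i t
                = integral {a..t} (\<lambda>s. \<Phi> (P (Suc k)) i s - \<Phi> (P k) i s)"
      proof -
        have e1: "P (Suc (Suc k)) i t = y0 i + integral {a..t} (\<Phi> (P (Suc k)) i)"
          by (simp only: PS[of "Suc k"])
        have e2: "P (Suc k) i t = y0 i + integral {a..t} (\<Phi> (P k) i)"
          by (simp only: PS[of k])
        have e3: "integral {a..t} (\<lambda>s. \<Phi> (P (Suc k)) i s - \<Phi> (P k) i s) = integral {a..t} (\<Phi> (P (Suc k)) i) - integral {a..t} (\<Phi> (P k) i)"
          by (rule integral_diff[OF intP[OF i t] intP[OF i t]])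
        show ?thesis unfolding e1 e2 e3 by simp
      qed
      have pint: "((\<lambda>s. (L * M * L^k) * (s - a)^k / fact k) has_integral
                   (L * M * L^k) * (t - a)^(Suc k) / fact (Suc k)) {a..t}"
        using t by (intro poly_has_integral) auto
      have "norm (integral {a..t} (\<lambda>s. \<Phi> (P (Suc k)) i s - \<Phi> (P k) i s))
             \<le> integral {a..t} (\<lambda>s. (L * M * L^k) * (s - a)^k / fact k)"
      proof (rule integral_norm_bound_integral)
        show "(\<lambda>s. \<Phi> (P (Suc k)) i s - \<Phi> (P k) i s) integrable_on {a..t}"
          using intP[OF i t] by (intro integrable_diff)
        show "(\<lambda>s. (L * M * L^k) * (s - a)^k / fact k) integrable_on {a..t}"
          using pint by blast
        fix s assume s: "s \<in> {a..t}"
        have "norm (\<Phi> (P (Suc k)) i s - \<Phi> (P k) i s) \<le> L * (M * L^k * (s - a)^k / fact k)"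
        proof (rule lip[OF i])
          show "s \<in> {a..b}" using s t by auto
          fix j u assume j: "j \<in> I" and u: "u \<in> {a..s}"
          have "norm (P (Suc k) j u - P k j u) \<le> M * L^k * (u - a)^k / fact k"
            using Suc.IH j u s t by auto
          also have "\<dots> \<le> M * L^k * (s - a)^k / fact k"
            using u M0 L by (intro divide_right_mono mult_left_mono power_mono) auto
          finally show "norm (P (Suc k) j u - P k j u) \<le> M * L^k * (s - a)^k / fact k" .
        qed
        then show "norm (\<Phi> (P (Suc k)) i s - \<Phi> (P k) i s) \<le> (L * M * L^k) * (s - a)^k / fact k"
          by (simp add: field_simps)
      qed
      also have "\<dots> = (L * M * L^k) * (t - a)^(Suc k) / fact (Suc k)"
        using pint by (rule integral_unique)
      finally show "norm (P (Suc (Suc k)) i t - P (Suc k) i t) \<le> M * L^(Suc k) * (t - a)^(Suc k) / fact (Suc k)"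
        by (simp add: eq field_simps)
    qed
  qed
  define y where "y i t = y0 i + suminf (\<lambda>l. P (Suc l) i t - P l i t)" for i t
  have tele: "P k i t = y0 i + (\<Sum>l<k. P (Suc l) i t - P l i t)" for k i t
    by (simp add: sum_lessThan_telescope[of "\<lambda>l. P l i t"] P0)
  have ul: "uniform_limit {a..b} (\<lambda>k t. \<Sum>l<k. P (Suc l) i t - P l i t)
              (\<lambda>t. suminf (\<lambda>l. P (Suc l) i t - P l i t)) sequentially" if i: "i \<in> I" for i
  proof (rule Weierstrass_m_test)
    show "summable (\<lambda>l. M * ((L * (b - a))^l / fact l))"
      by (intro summable_mult summable_pow_fact)
    fix l t assume t: "t \<in> {a..b}"
    have "norm (P (Suc l) i t - P l i t) \<le> M * L^l * (t - a)^l / fact l" using F3 i t by blast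
    also have "\<dots> \<le> M * L^l * (b - a)^l / fact l"
      using t M0 L by (intro divide_right_mono mult_left_mono power_mono) auto
    finally show "norm (P (Suc l) i t - P l i t) \<le> M * ((L * (b - a))^l / fact l)"
      by (simp add: power_mult_distrib mult.assoc)
  qed
  have ycont: "continuous_on {a..b} (y i)" if i: "i \<in> I" for i
  proof -
    have "continuous_on {a..b} (\<lambda>t. suminf (\<lambda>l. P (Suc l) i t - P l i t))"
    proof (rule uniform_limit_theorem[OF _ ul[OF i]])
      show "\<forall>\<^sub>F k in sequentially. continuous_on {a..b} (\<lambda>t. \<Sum>l<k. P (Suc l) i t - P l i t)"
        using F1 i by (intro always_eventually allI continuous_intros) auto
    qed simp
    then show ?thesis unfolding y_def by (intro continuous_intros)
  qed
  have unif: "\<forall>\<^sub>F k in sequentially. \<forall>j\<in>I. \<forall>u\<in>{a..b}. norm (P k j u - y j u) < e" if e: "e > 0" for e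
  proof (rule eventually_ball_finite[OF I], rule ballI)
    fix j assume j: "j \<in> I"
    have "\<forall>\<^sub>F k in sequentially. \<forall>u\<in>{a..b}. dist (\<Sum>l<k. P (Suc l) j u - P l j u)
              (suminf (\<lambda>l. P (Suc l) j u - P l j u)) < e"
      using ul[OF j] e unfolding uniform_limit_iff by blast
    then show "\<forall>\<^sub>F k in sequentially. \<forall>u\<in>{a..b}. norm (P k j u - y j u) < e"
    proof (rule eventually_mono)
      fix k assume H: "\<forall>u\<in>{a..b}. dist (\<Sum>l<k. P (Suc l) j u - P l j u)
              (suminf (\<lambda>l. P (Suc l) j u - P l j u)) < e"
      show "\<forall>u\<in>{a..b}. norm (P k j u - y j u) < e"
      proof
        fix u assume u: "u \<in> {a..b}"
        have "P k j u - y j u = (\<Sum>l<k. P (Suc l) j u - P l j u) - suminf (\<lambda>l. P (Suc l) j u - P l j u)"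
          by (subst tele[of k j u]) (simp add: y_def)
        then show "norm (P k j u - y j u) < e" using H u by (simp add: dist_norm)
      qed
    qed
  qed
  have yeq: "y i t = y0 i + integral {a..t} (\<Phi> y i)" if i: "i \<in> I" and t: "t \<in> {a..b}" for i t
  proof -
    have l1: "(\<lambda>k. P k i t) \<longlonglongrightarrow> y i t"
    proof -
      have "(\<lambda>k. y0 i + (\<Sum>l<k. P (Suc l) i t - P l i t)) \<longlonglongrightarrow> y0 i + suminf (\<lambda>l. P (Suc l) i t - P l i t)"
        by (intro tendsto_add tendsto_const tendsto_uniform_limitI[OF ul[OF i] t])
      then show ?thesis by (simp add: tele[symmetric] y_def)
    qed
    have yc: "continuous_on {a..b} (\<Phi> y i)"
    proof (rule cont[OF i])
      fix j assume j: "j \<in> I"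
      have "(\<lambda>k. P k j a) \<longlonglongrightarrow> y j a"
      proof -
        have "(\<lambda>k. y0 j + (\<Sum>l<k. P (Suc l) j a - P l j a)) \<longlonglongrightarrow> y0 j + suminf (\<lambda>l. P (Suc l) j a - P l j a)"
          by (intro tendsto_add tendsto_const tendsto_uniform_limitI[OF ul[OF j]]) (use ab in auto)
        then show ?thesis by (simp add: tele[symmetric] y_def)
      qed
      moreover have "(\<lambda>k. P k j a) \<longlonglongrightarrow> y0 j"
      proof -
        have "(\<lambda>k. P k j a) = (\<lambda>k. y0 j)" using F1 j by auto
        then show ?thesis by simp
      qed
      ultimately have "y j a = y0 j" by (rule LIMSEQ_unique)
      then show "continuous_on {a..b} (y j) \<and> y j a = y0 j" using ycont[OF j] by blast
    qed
    have yint: "\<Phi> y i integrable_on {a..t}"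
      using t by (intro integrable_continuous_real continuous_on_subset[OF yc]) auto
    have l2: "(\<lambda>k. P (Suc k) i t) \<longlonglongrightarrow> y0 i + integral {a..t} (\<Phi> y i)"
    proof -
      have "(\<lambda>k. integral {a..t} (\<Phi> (P k) i)) \<longlonglongrightarrow> integral {a..t} (\<Phi> y i)"
      proof (rule tendstoI)
        fix e :: real assume e: "e > 0"
        define e' where "e' = e / (L * (b - a) + 1)"
        have den: "L * (b - a) + 1 > 0" using L ab by (simp add: add_nonneg_pos)
        have e': "e' > 0" using e den by (simp add: e'_def)
        show "\<forall>\<^sub>F k in sequentially. dist (integral {a..t} (\<Phi> (P k) i)) (integral {a..t} (\<Phi> y i)) < e"
          using unif[OF e']
        proof eventually_elim
          case (elim k)
          have "norm (integral {a..t} (\<lambda>s. \<Phi> (P k) i s - \<Phi> y i s)) \<le> integral {a..t} (\<lambda>s. L * e')"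
          proof (rule integral_norm_bound_integral)
            show "(\<lambda>s. \<Phi> (P k) i s - \<Phi> y i s) integrable_on {a..t}"
              using intP[OF i t] yint by (intro integrable_diff)
            fix s assume s: "s \<in> {a..t}"
            show "norm (\<Phi> (P k) i s - \<Phi> y i s) \<le> L * e'"
            proof (rule lip[OF i])
              show "s \<in> {a..b}" using s t by auto
              fix j u assume j: "j \<in> I" and u: "u \<in> {a..s}"
              have "u \<in> {a..b}" using u s t by auto
              then have "norm (P k j u - y j u) < e'" using elim j by blast
              then show "norm (P k j u - y j u) \<le> e'" by simp
            qed
          qed auto
          also have "\<dots> = (t - a) * (L * e')" using t by simp
          also have "\<dots> \<le> (b - a) * (L * e')"
            using t L e' by (intro mult_right_mono) auto
          also have "\<dots> < e"
          proof -
            have "(b - a) * (L * e') = e * (L * (b - a)) / (L * (b - a) + 1)"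
              by (simp add: e'_def field_simps)
            also have "\<dots> < e" using e den L ab by (simp add: field_simps)
            finally show ?thesis .
          qed
          finally show ?case
            by (simp add: dist_norm integral_diff[OF intP[OF i t] yint])
        qed
      qed
      then show ?thesis unfolding PS by (intro tendsto_add tendsto_const)
    qed
    have "(\<lambda>k. P (Suc k) i t) \<longlonglongrightarrow> y i t" using l1 by (rule LIMSEQ_Suc)
    then show ?thesis using l2 by (rule LIMSEQ_unique)
  qed
  show ?thesis
  proof (intro exI[of _ y] ballI conjI)
    fix i assume i: "i \<in> I"
    show "continuous_on {a..b} (y i)" using ycont[OF i] .
    show "y i a = y0 i" using yeq[OF i] ab by simp
    fix t assume t: "t \<in> {a..b}"
    have c: "continuous_on {a..b} (\<Phi> y i)"
    proof (rule cont[OF i])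
      fix j assume j: "j \<in> I"
      show "continuous_on {a..b} (y j) \<and> y j a = y0 j" using ycont[OF j] yeq[OF j] ab by simp
    qed
    have "((\<lambda>u. y0 i + integral {a..u} (\<Phi> y i)) has_vector_derivative \<Phi> y i t) (at t within {a..b})"
      using integral_has_vector_derivative[OF c t] by (intro derivative_eq_intros) auto
    then show "(y i has_vector_derivative \<Phi> y i t) (at t within {a..b})"
      by (rule has_vector_derivative_transform[OF t, rotated]) (simp add: yeq[OF i])
  qed
qed



definition mn :: "real^'d^'d \<Rightarrow> real" where
  "mn M = (\<Sum>i\<in>UNIV. \<Sum>k\<in>UNIV. \<bar>M $ i $ k\<bar>)"

lemma mn_nonneg: "mn M \<ge> 0"
  unfolding mn_def by (intro sum_nonneg) auto

lemma norm_vec_le_sum: "norm (x :: 'a::real_normed_vector^'n) \<le> (\<Sum>i\<in>UNIV. norm (x $ i))"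
  by (simp add: norm_vec_def L2_set_le_sum)

lemma norm_mv: "norm (cmat M *v x) \<le> mn M * norm x"
proof -
  have "norm (cmat M *v x) \<le> (\<Sum>i\<in>UNIV. norm ((cmat M *v x) $ i))" by (rule norm_vec_le_sum)
  also have "\<dots> \<le> (\<Sum>i\<in>UNIV. \<Sum>k\<in>UNIV. \<bar>M $ i $ k\<bar> * norm x)"
  proof (rule sum_mono)
    fix i
    have "norm ((cmat M *v x) $ i) = norm (\<Sum>k\<in>UNIV. complex_of_real (M $ i $ k) * x $ k)"
      by (simp add: matrix_vector_mult_def cmat_def)
    also have "\<dots> \<le> (\<Sum>k\<in>UNIV. norm (complex_of_real (M $ i $ k) * x $ k))" by (rule norm_sum)
    also have "\<dots> \<le> (\<Sum>k\<in>UNIV. \<bar>M $ i $ k\<bar> * norm x)"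
    proof (rule sum_mono)
      fix k
      show "norm (complex_of_real (M $ i $ k) * x $ k) \<le> \<bar>M $ i $ k\<bar> * norm x"
      proof -
        have "norm (x $ k) \<le> norm x" by (rule Finite_Cartesian_Product.norm_nth_le)
        then show ?thesis by (simp add: norm_mult mult_left_mono)
      qed
    qed
    finally show "norm ((cmat M *v x) $ i) \<le> (\<Sum>k\<in>UNIV. \<bar>M $ i $ k\<bar> * norm x)" .
  qed
  also have "\<dots> = mn M * norm x" by (simp add: mn_def sum_distrib_right)
  finally show ?thesis .
qed

lemma norm_smult_vec: "norm (c *s (x :: complex^'n)) = norm c * norm x"
  by (simp add: norm_vec_def vector_scalar_mult_def norm_mult L2_set_right_distrib)

lemma bounded_linear_smult_vec: "bounded_linear (\<lambda>x :: complex^'n. c *s x)"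
proof (rule bounded_linear_intro[of _ "norm c"])
  show "c *s (x + y) = c *s x + c *s y" for x y :: "complex^'n" by (simp add: vec_eq_iff algebra_simps)
  show "c *s (r *\<^sub>R x) = r *\<^sub>R (c *s x)" for r and x :: "complex^'n"
    by (simp add: vec_eq_iff scaleR_conv_of_real)
  show "norm (c *s x) \<le> norm x * norm c" for x :: "complex^'n" by (simp add: norm_smult_vec)
qed

lemma scaleR_smult_vec: "r *\<^sub>R (x :: complex^'n) = complex_of_real r *s x"
proof -
  have "(r *\<^sub>R x) $ i = (complex_of_real r *s x) $ i" for i
    by (subst vector_scaleR_component) (simp add: scaleR_conv_of_real)
  then show ?thesis by (simp add: vec_eq_iff)
qed

lemma cont_smult [continuous_intros]:
  "continuous_on S f \<Longrightarrow> continuous_on S (\<lambda>t. c *s (f t :: complex^'n))"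
  using bounded_linear_smult_vec[of c]
  by (rule bounded_linear.continuous_on[where g = f]) 

lemma cont_mv [continuous_intros]:
  assumes "continuous_on S A" "continuous_on S y"
  shows "continuous_on S (\<lambda>t. cmat (A t) *v (y t :: complex^'d))"
  unfolding matrix_vector_mult_def cmat_def
  by (simp, intro continuous_on_vec_lambda continuous_intros assms)

lemma smooth_cont: "smooth_fun f \<Longrightarrow> continuous_on S f"
proof -
  assume "smooth_fun f"
  then obtain D where D0: "D 0 = f" and D: "\<And>k t. (D k has_vector_derivative D (Suc k) t) (at t)"
    unfolding smooth_fun_def by blast
  have "isCont f t" for t using D[of 0 t] D0 has_vector_derivative_continuous by metis
  then show ?thesis by (simp add: continuous_at_imp_continuous_on)
qed

lemma cont_bound:
  fixes g :: "real \<Rightarrow> real"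
  assumes "continuous_on {c..d} g"
  obtains K where "K \<ge> 0" "\<And>t. t \<in> {c..d} \<Longrightarrow> \<bar>g t\<bar> \<le> K"
proof -
  have "bounded (g ` {c..d})" using assms by (intro compact_imp_bounded compact_continuous_image) auto
  then obtain K where "\<And>y. y \<in> g ` {c..d} \<Longrightarrow> norm y \<le> K" unfolding bounded_iff by blast
  then show ?thesis by (intro that[of "max K 0"]) force+
qed

lemma deriv_cont_on:
  assumes "\<And>t. t \<in> S \<Longrightarrow> (f has_vector_derivative f' t) (at t within S)"
  shows "continuous_on S f"
  using assms has_vector_derivative_continuous continuous_on_eq_continuous_within by blast

lemma loc_deriv:
  fixes t c :: real
  assumes "(g has_vector_derivative D) (at t within (S \<inter> {..c}))" "t \<in> S" "t < c"
    and "\<And>u. u \<in> S \<Longrightarrow> u \<le> c \<Longrightarrow> f u = g u"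
  shows "(f has_vector_derivative D) (at t within S)"
proof -
  have "at t within S = at t within (S \<inter> {..c})"
    by (rule at_within_nhd[of _ "{..<c}"]) (use assms in \<open>auto simp: open_lessThan\<close>)
  moreover have "(f has_vector_derivative D) (at t within (S \<inter> {..c}))"
    by (rule has_vector_derivative_transform[OF _ _ assms(1)]) (use assms in auto)
  ultimately show ?thesis by simp
qed

lemma loc_cont:
  fixes t c :: real
  assumes "continuous_on (S \<inter> {..c}) g" "t \<in> S" "t < c"
    and "\<And>u. u \<in> S \<Longrightarrow> u \<le> c \<Longrightarrow> f u = g u"
  shows "continuous (at t within S) f"
proof -
  have "at t within S = at t within (S \<inter> {..c})"
    by (rule at_within_nhd[of _ "{..<c}"]) (use assms in \<open>auto simp: open_lessThan\<close>)
  moreover have "continuous_on (S \<inter> {..c}) f"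
    using assms(1) by (rule continuous_on_eq) (use assms in auto)
  then have "continuous (at t within (S \<inter> {..c})) f"
    using assms by (simp add: continuous_on_eq_continuous_within)
  ultimately show ?thesis by (simp add: continuous_within)
qed



locale dsys =
  fixes A :: "nat \<Rightarrow> real \<Rightarrow> real^'d^'d" and ns :: "nat \<Rightarrow> nat" and h :: nat and \<Delta> :: real
  assumes Dpos: "\<Delta> > 0" and ns0: "ns 0 = 0"
    and ns_mono: "\<And>j. 1 \<le> j \<Longrightarrow> j < h \<Longrightarrow> ns j < ns (Suc j)"
    and Acont: "\<And>j. j \<le> h \<Longrightarrow> continuous_on UNIV (A j)"
begin

definition RHS :: "(real \<Rightarrow> complex^'d) \<Rightarrow> real \<Rightarrow> complex^'d" where
  "RHS x t = (\<Sum>j\<le>h. cmat (A j t) *v x (t - tau ns \<Delta> j))"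

lemma ns_le: assumes "j \<le> h" shows "ns j \<le> ns h"
proof (cases "j = 0")
  case True then show ?thesis using ns0 by simp
next
  case False
  have "j \<le> k \<longrightarrow> k \<le> h \<longrightarrow> ns j \<le> ns k" for k
  proof (induction k)
    case 0 then show ?case using False by simp
  next
    case (Suc k)
    show ?case
    proof (intro impI)
      assume "j \<le> Suc k" "Suc k \<le> h"
      show "ns j \<le> ns (Suc k)"
      proof (cases "j = Suc k")
        case False
        then have "j \<le> k" using \<open>j \<le> Suc k\<close> by simp
        then have "ns j \<le> ns k" using Suc.IH \<open>Suc k \<le> h\<close> by simp
        also have "ns k < ns (Suc k)" using ns_mono[of k] \<open>j \<le> k\<close> \<open>j \<noteq> 0\<close> \<open>Suc k \<le> h\<close> by simp
        finally show ?thesis by simp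
      qed simp
    qed
  qed
  then show ?thesis using assms by simp
qed

lemma tau_nonneg: "tau ns \<Delta> j \<ge> 0"
  using Dpos by (simp add: tau_def)

lemma tau_le: "j \<le> h \<Longrightarrow> tau ns \<Delta> j \<le> tau ns \<Delta> h"
  using ns_le Dpos by (simp add: tau_def)

lemma Ksum: obtains K where "K \<ge> 0" "\<And>t. t \<in> {c..d} \<Longrightarrow> (\<Sum>j\<le>h. mn (A j t)) \<le> K"
proof -
  have cc: "continuous_on {c..d} (\<lambda>t. \<Sum>j\<le>h. mn (A j t))"
    unfolding mn_def
    by (intro continuous_intros continuous_on_subset[OF Acont]) auto
  then obtain K where "K \<ge> 0" "\<And>t. t \<in> {c..d} \<Longrightarrow> \<bar>\<Sum>j\<le>h. mn (A j t)\<bar> \<le> K"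
    using cont_bound[OF cc] by metis
  then show ?thesis by (intro that[of K]) force+
qed

lemma RHS_norm:
  assumes "\<And>j. j \<le> h \<Longrightarrow> norm (x (t - tau ns \<Delta> j) - y (t - tau ns \<Delta> j)) \<le> B"
  shows "norm (RHS x t - RHS y t) \<le> (\<Sum>j\<le>h. mn (A j t)) * B"
proof -
  have "RHS x t - RHS y t = (\<Sum>j\<le>h. cmat (A j t) *v (x (t - tau ns \<Delta> j) - y (t - tau ns \<Delta> j)))"
    by (simp add: RHS_def sum_subtractf matrix_vector_mult_diff_distrib)
  also have "norm \<dots> \<le> (\<Sum>j\<le>h. norm (cmat (A j t) *v (x (t - tau ns \<Delta> j) - y (t - tau ns \<Delta> j))))"
    by (rule norm_sum)
  also have "\<dots> \<le> (\<Sum>j\<le>h. mn (A j t) * B)"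
  proof (rule sum_mono)
    fix j assume "j \<in> {..h}"
    then show "norm (cmat (A j t) *v (x (t - tau ns \<Delta> j) - y (t - tau ns \<Delta> j))) \<le> mn (A j t) * B"
      using norm_mv[of "A j t"] assms[of j] mn_nonneg[of "A j t"]
      by (meson atMost_iff mult_left_mono order_trans)
  qed
  also have "\<dots> = (\<Sum>j\<le>h. mn (A j t)) * B" by (simp add: sum_distrib_right)
  finally show ?thesis .
qed

lemma DU_b:
  assumes b: "b \<ge> 0"
    and c1: "continuous_on {- tau ns \<Delta> h..b} x1" and c2: "continuous_on {- tau ns \<Delta> h..b} x2"
    and i1: "\<And>t. t \<in> {- tau ns \<Delta> h..0} \<Longrightarrow> x1 t = \<phi> t"
    and i2: "\<And>t. t \<in> {- tau ns \<Delta> h..0} \<Longrightarrow> x2 t = \<phi> t"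
    and d1: "\<And>t. t \<in> {0..b} \<Longrightarrow> (x1 has_vector_derivative RHS x1 t) (at t within {0..b})"
    and d2: "\<And>t. t \<in> {0..b} \<Longrightarrow> (x2 has_vector_derivative RHS x2 t) (at t within {0..b})"
    and t: "t \<in> {- tau ns \<Delta> h..b}"
  shows "x1 t = x2 t"
proof (cases "t \<le> 0")
  case True then show ?thesis using i1 i2 t by simp
next
  case False
  have th: "tau ns \<Delta> h \<ge> 0" by (rule tau_nonneg)
  obtain K where K0: "K \<ge> 0" and K: "\<And>s. s \<in> {0..b} \<Longrightarrow> (\<Sum>j\<le>h. mn (A j s)) \<le> K"
    using Ksum by blast
  have sub: "{0..b} \<subseteq> {- tau ns \<Delta> h..b}" using th by auto
  have "(\<lambda>_ s. x1 s - x2 s) (0::nat) t = 0"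
  proof (rule GU[where I="{0::nat}" and a=0 and b=b and L=K and D="\<lambda>_ s. RHS x1 s - RHS x2 s"])
    show "continuous_on {0..b} (\<lambda>s. x1 s - x2 s)" for i :: nat
      using c1 c2 by (intro continuous_intros continuous_on_subset[OF _ sub]) auto
    show "x1 0 - x2 0 = 0" using i1 i2 th by simp
    show "((\<lambda>s. x1 s - x2 s) has_vector_derivative RHS x1 s - RHS x2 s) (at s within {0..b})"
      if "s \<in> {0..b}" for s using d1 d2 that by (intro derivative_intros) auto
    fix i :: nat and s B
    assume s: "s \<in> {0..b}" and HB: "\<And>j u. j \<in> {0::nat} \<Longrightarrow> u \<in> {0..s} \<Longrightarrow> norm (x1 u - x2 u) \<le> B"
    have B0: "B \<ge> 0" using HB[of 0 0] s by (meson atLeastAtMost_iff insertI1 norm_ge_zero order_trans order_refl)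
    have "norm (RHS x1 s - RHS x2 s) \<le> (\<Sum>j\<le>h. mn (A j s)) * B"
    proof (rule RHS_norm)
      fix j assume j: "j \<le> h"
      show "norm (x1 (s - tau ns \<Delta> j) - x2 (s - tau ns \<Delta> j)) \<le> B"
      proof (cases "s - tau ns \<Delta> j \<le> 0")
        case True
        have "s - tau ns \<Delta> j \<ge> - tau ns \<Delta> h" using tau_le[OF j] s by auto
        then show ?thesis using i1 i2 True B0 by simp
      next
        case False
        then show ?thesis using HB[of 0 "s - tau ns \<Delta> j"] tau_nonneg[of j] by simp
      qed
    qed
    also have "\<dots> \<le> K * B" using K[OF s] B0 by (rule mult_right_mono)
    finally show "norm (RHS x1 s - RHS x2 s) \<le> K * B" .
  qed (use K0 b False t in auto)
  then show ?thesis by simp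
qed

end


context dsys begin

lemma ext_cont:
  assumes "continuous_on {- tau ns \<Delta> h..0} \<phi>" "continuous_on {0..b} g" "g 0 = \<phi> 0" "b \<ge> 0"
  shows "continuous_on {- tau ns \<Delta> h..b} (\<lambda>u. if u \<le> 0 then \<phi> u else g u)"
proof (rule continuous_on_cases_le[where h="\<lambda>u. u" and a=0])
  have th: "tau ns \<Delta> h \<ge> 0" by (rule tau_nonneg)
  have "{u \<in> {- tau ns \<Delta> h..b}. u \<le> 0} = {- tau ns \<Delta> h..0}" using assms(4) by auto
  then show "continuous_on {u \<in> {- tau ns \<Delta> h..b}. u \<le> 0} \<phi>" using assms(1) by simp
  have "{u \<in> {- tau ns \<Delta> h..b}. 0 \<le> u} = {0..b}" using th by auto
  then show "continuous_on {u \<in> {- tau ns \<Delta> h..b}. 0 \<le> u} g" using assms(2) by simp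
qed (use assms in \<open>auto intro: continuous_on_id\<close>)

lemma DE_b:
  assumes phi: "continuous_on {- tau ns \<Delta> h..0} \<phi>" and b: "b \<ge> 0"
  shows "\<exists>x. continuous_on {- tau ns \<Delta> h..b} x \<and> (\<forall>t\<in>{- tau ns \<Delta> h..0}. x t = \<phi> t) \<and>
             (\<forall>t\<in>{0..b}. (x has_vector_derivative RHS x t) (at t within {0..b}))"
proof -
  have th: "tau ns \<Delta> h \<ge> 0" by (rule tau_nonneg)
  define ext where "ext g u = (if u \<le> 0 then \<phi> u else g u)" for g :: "real \<Rightarrow> complex^'d" and u
  obtain K where K0: "K \<ge> 0" and K: "\<And>s. s \<in> {0..b} \<Longrightarrow> (\<Sum>j\<le>h. mn (A j s)) \<le> K"
    using Ksum by blast
  have "\<exists>y. \<forall>i\<in>{0::nat}. continuous_on {0..b} (y i) \<and> y i 0 = (\<lambda>_. \<phi> 0) i \<and>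
             (\<forall>t\<in>{0..b}. (y i has_vector_derivative (\<lambda>y i s. RHS (ext (y 0)) s) y i t) (at t within {0..b}))"
  proof (rule GEN[where L=K])
    fix y :: "nat \<Rightarrow> real \<Rightarrow> complex^'d" and i :: nat
    assume "i \<in> {0}" and H: "\<And>j. j \<in> {0::nat} \<Longrightarrow> continuous_on {0..b} (y j) \<and> y j 0 = \<phi> 0"
    have ce: "continuous_on {- tau ns \<Delta> h..b} (ext (y 0))"
      unfolding ext_def using H[of 0] by (intro ext_cont phi b) auto
    show "continuous_on {0..b} ((\<lambda>y i s. RHS (ext (y 0)) s) y i)"
      unfolding RHS_def
    proof (intro continuous_intros)
      fix j assume j: "j \<in> {..h}"
      show "continuous_on {0..b} (A j)" using Acont j by (auto intro: continuous_on_subset)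
      show "continuous_on {0..b} (\<lambda>t. ext (y 0) (t - tau ns \<Delta> j))"
      proof (rule continuous_on_compose2[OF ce])
        show "continuous_on {0..b} (\<lambda>t. t - tau ns \<Delta> j)" by (intro continuous_intros)
        show "(\<lambda>t. t - tau ns \<Delta> j) ` {0..b} \<subseteq> {- tau ns \<Delta> h..b}"
          using tau_le[of j] tau_nonneg[of j] j by auto
      qed
    qed
  next
    fix y w :: "nat \<Rightarrow> real \<Rightarrow> complex^'d" and i :: nat and s B
    assume "i \<in> {0}" and s: "s \<in> {0..b}"
      and HB: "\<And>j u. j \<in> {0::nat} \<Longrightarrow> u \<in> {0..s} \<Longrightarrow> norm (y j u - w j u) \<le> B"
    have B0: "B \<ge> 0" using HB[of 0 0] s by (meson atLeastAtMost_iff insertI1 norm_ge_zero order_trans order_refl)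
    have "norm (RHS (ext (y 0)) s - RHS (ext (w 0)) s) \<le> (\<Sum>j\<le>h. mn (A j s)) * B"
    proof (rule RHS_norm)
      fix j assume j: "j \<le> h"
      show "norm (ext (y 0) (s - tau ns \<Delta> j) - ext (w 0) (s - tau ns \<Delta> j)) \<le> B"
        using HB[of 0 "s - tau ns \<Delta> j"] tau_nonneg[of j] B0 by (auto simp: ext_def)
    qed
    also have "\<dots> \<le> K * B" using K[OF s] B0 by (rule mult_right_mono)
    finally show "norm ((\<lambda>y i s. RHS (ext (y 0)) s) y i s - (\<lambda>y i s. RHS (ext (y 0)) s) w i s) \<le> K * B"
      by simp
  qed (use b K0 in auto)
  then obtain y where yc: "continuous_on {0..b} (y 0)" and y0: "y 0 0 = \<phi> 0"
    and yd: "\<And>t. t \<in> {0..b} \<Longrightarrow> (y 0 has_vector_derivative RHS (ext (y 0)) t) (at t within {0..b})"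
    by auto
  show ?thesis
  proof (intro exI[of _ "ext (y 0)"] conjI ballI)
    show "continuous_on {- tau ns \<Delta> h..b} (ext (y 0))"
      unfolding ext_def using yc y0 by (intro ext_cont phi b) auto
    fix t assume "t \<in> {- tau ns \<Delta> h..0}"
    then show "ext (y 0) t = \<phi> t" by (simp add: ext_def)
  next
    fix t assume t: "t \<in> {0..b}"
    show "(ext (y 0) has_vector_derivative RHS (ext (y 0)) t) (at t within {0..b})"
      by (rule has_vector_derivative_transform[OF t _ yd[OF t]]) (auto simp: ext_def y0)
  qed
qed

lemma dde_sol_D:
  assumes "dde_sol A ns h \<Delta> 0 \<phi> x"
  shows "continuous_on {- tau ns \<Delta> h..} x" "\<And>t. t \<in> {- tau ns \<Delta> h..0} \<Longrightarrow> x t = \<phi> t"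
    "\<And>t. t \<ge> 0 \<Longrightarrow> (x has_vector_derivative RHS x t) (at t within {0..})"
  using assms by (auto simp: dde_sol_def RHS_def)

lemma DU:
  assumes "dde_sol A ns h \<Delta> 0 \<phi> x1" "dde_sol A ns h \<Delta> 0 \<phi> x2" "t \<ge> - tau ns \<Delta> h"
  shows "x1 t = x2 t"
proof (rule DU_b[where b="max t 0"])
  note D1 = dde_sol_D[OF assms(1)] and D2 = dde_sol_D[OF assms(2)]
  show "continuous_on {- tau ns \<Delta> h..max t 0} x1" by (rule continuous_on_subset[OF D1(1)]) auto
  show "continuous_on {- tau ns \<Delta> h..max t 0} x2" by (rule continuous_on_subset[OF D2(1)]) auto
  show "(x1 has_vector_derivative RHS x1 s) (at s within {0..max t 0})" if "s \<in> {0..max t 0}" for s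
    using D1(3)[of s] that by (auto intro: has_vector_derivative_within_subset)
  show "(x2 has_vector_derivative RHS x2 s) (at s within {0..max t 0})" if "s \<in> {0..max t 0}" for s
    using D2(3)[of s] that by (auto intro: has_vector_derivative_within_subset)
qed (use assms dde_sol_D[OF assms(1)] dde_sol_D[OF assms(2)] in auto)

lemma dde_x_eq:
  assumes "dde_sol A ns h \<Delta> 0 \<phi> x" "t \<ge> - tau ns \<Delta> h"
  shows "dde_x A ns h \<Delta> 0 \<phi> t = x t"
  unfolding dde_x_def
proof (rule the_equality)
  show "\<exists>x'. dde_sol A ns h \<Delta> 0 \<phi> x' \<and> x' t = x t" using assms(1) by blast
  fix y assume "\<exists>x'. dde_sol A ns h \<Delta> 0 \<phi> x' \<and> x' t = y"
  then obtain x' where "dde_sol A ns h \<Delta> 0 \<phi> x'" "x' t = y" by blast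
  then show "y = x t" using DU[OF _ assms(1) assms(2)] by blast
qed

lemma DE:
  assumes phi: "continuous_on {- tau ns \<Delta> h..0} \<phi>"
  shows "\<exists>x. dde_sol A ns h \<Delta> 0 \<phi> x"
proof -
  have th: "tau ns \<Delta> h \<ge> 0" by (rule tau_nonneg)
  have "\<forall>n::nat. \<exists>x. continuous_on {- tau ns \<Delta> h..real n} x \<and> (\<forall>t\<in>{- tau ns \<Delta> h..0}. x t = \<phi> t) \<and>
             (\<forall>t\<in>{0..real n}. (x has_vector_derivative RHS x t) (at t within {0..real n}))"
    using DE_b[OF phi] by simp
  then obtain X where Xc: "\<And>n. continuous_on {- tau ns \<Delta> h..real n} (X n)"
    and Xi: "\<And>n t. t \<in> {- tau ns \<Delta> h..0} \<Longrightarrow> X n t = \<phi> t"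
    and Xd: "\<And>n t. t \<in> {0..real n} \<Longrightarrow> (X n has_vector_derivative RHS (X n) t) (at t within {0..real n})"
    by metis
  have agree: "X m t = X n t" if "m \<le> n" "t \<in> {- tau ns \<Delta> h..real m}" for m n t
  proof (rule DU_b[where b="real m" and \<phi>=\<phi>])
    show "continuous_on {- tau ns \<Delta> h..real m} (X n)"
      by (rule continuous_on_subset[OF Xc]) (use that in auto)
    show "(X n has_vector_derivative RHS (X n) s) (at s within {0..real m})" if "s \<in> {0..real m}" for s
      using Xd[of s n] that \<open>m \<le> n\<close> by (auto intro: has_vector_derivative_within_subset)
  qed (use that Xc Xi Xd in auto)
  define x where "x t = X (nat \<lceil>t\<rceil> + 1) t" for t
  have xX: "x u = X n u" if "u \<in> {- tau ns \<Delta> h..real n}" for n u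
  proof -
    have u: "u \<le> real (nat \<lceil>u\<rceil> + 1)" by linarith
    have "x u = X (min (nat \<lceil>u\<rceil> + 1) n) u"
      unfolding x_def using that u by (intro agree[symmetric]) auto
    also have "\<dots> = X n u" using that u by (intro agree) auto
    finally show ?thesis .
  qed
  have "dde_sol A ns h \<Delta> 0 \<phi> x"
    unfolding dde_sol_def
  proof (intro conjI ballI allI impI)
    show "continuous_on {0 - tau ns \<Delta> h..} x"
      unfolding continuous_on_eq_continuous_within
    proof
      fix t assume t: "t \<in> {0 - tau ns \<Delta> h..}"
      define n where "n = nat \<lceil>t\<rceil> + 1"
      have tn: "t < real n" unfolding n_def by linarith
      show "continuous (at t within {0 - tau ns \<Delta> h..}) x"
      proof (rule loc_cont[where c="real n" and g="X n"])
        show "continuous_on ({0 - tau ns \<Delta> h..} \<inter> {..real n}) (X n)"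
          using Xc[of n] by (simp add: atLeastAtMost_def)
      qed (use t tn xX in auto)
    qed
    fix t assume "t \<in> {0 - tau ns \<Delta> h..0}"
    then show "x t = \<phi> (t - 0)" using xX[of t 0] Xi by auto
  next
    fix t :: real assume t: "t \<ge> 0"
    define n where "n = nat \<lceil>t\<rceil> + 1"
    have tn: "t < real n" unfolding n_def by linarith
    have eq: "RHS (X n) t = RHS x t"
      unfolding RHS_def
    proof (intro sum.cong refl arg_cong2[where f="\<lambda>M x. M *v x"])
      fix j assume "j \<in> {..h}"
      then show "X n (t - tau ns \<Delta> j) = x (t - tau ns \<Delta> j)"
        using tau_le[of j] tau_nonneg[of j] t tn by (intro xX[symmetric]) auto
    qed
    have "(x has_vector_derivative RHS x t) (at t within {0..})"
    proof (rule loc_deriv[where c="real n" and g="X n"])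
      show "(X n has_vector_derivative RHS x t) (at t within {0..} \<inter> {..real n})"
        using Xd[of t n] t tn eq by (simp add: atLeastAtMost_def)
    qed (use t tn xX th in auto)
    then show "(x has_vector_derivative (\<Sum>j\<le>h. cmat (A j t) *v x (t - tau ns \<Delta> j))) (at t within {0..})"
      by (simp add: RHS_def)
  qed
  then show ?thesis by blast
qed

end


lemma b_idx_range: "N > 0 \<Longrightarrow> b_idx N k \<in> {1..N}"
  unfolding b_idx_def
proof -
  assume N: "N > 0"
  have "(k - 1) mod int N < int N" "0 \<le> (k - 1) mod int N" using N by simp_all
  then show "nat ((k - 1) mod int N) + 1 \<in> {1..N}" by auto
qed

lemma smult_diff_vec: "c *s (x - y) = c *s x - c *s (y :: complex^'n)"
  by (simp add: vec_eq_iff algebra_simps)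

context dsys begin

lemma Amul_diff:
  "Amul A ns h \<Delta> N \<mu> s q n - Amul A ns h \<Delta> N \<mu> s w n =
   complex_of_real \<Delta> *s (\<Sum>j\<le>h. cmat (A j ((s + real n - 1) * \<Delta>)) *v
        ((\<mu> powi a_idx N (int n - int (ns j))) *s
          (q (b_idx N (int n - int (ns j))) - w (b_idx N (int n - int (ns j))))))"
  by (simp add: Amul_def smult_diff_vec matrix_vector_mult_diff_distrib sum_subtractf)

lemma Amul_lip:
  assumes N: "N > 0"
  obtains L :: real where "L \<ge> 0" "\<And>(s::real) (n::nat) (q::nat \<Rightarrow> complex^'d) (w::nat \<Rightarrow> complex^'d) (B::real). s \<in> {0..1} \<Longrightarrow> n \<in> {1..N} \<Longrightarrow>
     (\<And>m. m \<in> {1..N} \<Longrightarrow> norm (q m - w m) \<le> B) \<Longrightarrow>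
     norm (Amul A ns h \<Delta> N \<mu> s q n - Amul A ns h \<Delta> N \<mu> s w n) \<le> L * B"
proof -
  obtain K where K0: "K \<ge> 0" and K: "\<And>t. t \<in> {0..real N * \<Delta>} \<Longrightarrow> (\<Sum>j\<le>h. mn (A j t)) \<le> K"
    using Ksum by blast
  define CM where "CM = (\<Sum>n\<in>{1..N}. \<Sum>j\<le>h. norm (\<mu> powi a_idx N (int n - int (ns j))))"
  have CM: "norm (\<mu> powi a_idx N (int n - int (ns j))) \<le> CM" if "n \<in> {1..N}" "j \<le> h" for n j
  proof -
    have "norm (\<mu> powi a_idx N (int n - int (ns j))) \<le> (\<Sum>j\<le>h. norm (\<mu> powi a_idx N (int n - int (ns j))))"
      using that by (intro member_le_sum) auto
    also have "\<dots> \<le> CM" unfolding CM_def using that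
      by (intro member_le_sum[where f="\<lambda>n. \<Sum>j\<le>h. norm (\<mu> powi a_idx N (int n - int (ns j)))"] sum_nonneg) auto
    finally show ?thesis .
  qed
  have CM0: "CM \<ge> 0" unfolding CM_def by (intro sum_nonneg) auto
  show ?thesis
  proof (rule that[of "\<Delta> * (K * CM)"])
    show "\<Delta> * (K * CM) \<ge> 0" using Dpos K0 CM0 by simp
    fix s :: real and n :: nat and q w :: "nat \<Rightarrow> complex^'d" and B :: real
    assume s: "s \<in> {0..1}" and n: "n \<in> {1..N}" and HB: "\<And>m. m \<in> {1..N} \<Longrightarrow> norm (q m - w m) \<le> B"
    have "norm (q 1 - w 1) \<le> B" using HB[of 1] N by simp
    then have B0: "B \<ge> 0" using norm_ge_zero order_trans by blast
    define t where "t = (s + real n - 1) * \<Delta>"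
    have t: "t \<in> {0..real N * \<Delta>}" using s n Dpos unfolding t_def
      by (auto intro!: mult_nonneg_nonneg mult_right_mono)
    have "norm (Amul A ns h \<Delta> N \<mu> s q n - Amul A ns h \<Delta> N \<mu> s w n)
          = \<Delta> * norm (\<Sum>j\<le>h. cmat (A j t) *v
        ((\<mu> powi a_idx N (int n - int (ns j))) *s
          (q (b_idx N (int n - int (ns j))) - w (b_idx N (int n - int (ns j))))))"
      using Dpos by (simp add: Amul_diff norm_smult_vec t_def)
    also have "\<dots> \<le> \<Delta> * (\<Sum>j\<le>h. mn (A j t) * (CM * B))"
    proof (rule mult_left_mono)
      show "0 \<le> \<Delta>" using Dpos by simp
      have "norm (\<Sum>j\<le>h. cmat (A j t) *v
        ((\<mu> powi a_idx N (int n - int (ns j))) *s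
          (q (b_idx N (int n - int (ns j))) - w (b_idx N (int n - int (ns j))))))
        \<le> (\<Sum>j\<le>h. norm (cmat (A j t) *v
        ((\<mu> powi a_idx N (int n - int (ns j))) *s
          (q (b_idx N (int n - int (ns j))) - w (b_idx N (int n - int (ns j)))))))"
        by (rule norm_sum)
      also have "\<dots> \<le> (\<Sum>j\<le>h. mn (A j t) * (CM * B))"
      proof (rule sum_mono)
        fix j assume j: "j \<in> {..h}"
        have "norm (cmat (A j t) *v ((\<mu> powi a_idx N (int n - int (ns j))) *s
            (q (b_idx N (int n - int (ns j))) - w (b_idx N (int n - int (ns j))))))
            \<le> mn (A j t) * (norm (\<mu> powi a_idx N (int n - int (ns j))) *
                 norm (q (b_idx N (int n - int (ns j))) - w (b_idx N (int n - int (ns j)))))"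
          using norm_mv[of "A j t" "(\<mu> powi a_idx N (int n - int (ns j))) *s
            (q (b_idx N (int n - int (ns j))) - w (b_idx N (int n - int (ns j))))"]
          unfolding norm_smult_vec .
        also have "\<dots> \<le> mn (A j t) * (CM * B)"
        proof (rule mult_left_mono[OF mult_mono])
          show "norm (\<mu> powi a_idx N (int n - int (ns j))) \<le> CM" using CM[OF n, of j] j by simp
          show "norm (q (b_idx N (int n - int (ns j))) - w (b_idx N (int n - int (ns j)))) \<le> B"
            using HB[OF b_idx_range[OF N]] .
        qed (use CM0 mn_nonneg in auto)
        finally show "norm (cmat (A j t) *v ((\<mu> powi a_idx N (int n - int (ns j))) *s
            (q (b_idx N (int n - int (ns j))) - w (b_idx N (int n - int (ns j)))))) \<le> mn (A j t) * (CM * B)" .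
      qed
      finally show "norm (\<Sum>j\<le>h. cmat (A j t) *v
        ((\<mu> powi a_idx N (int n - int (ns j))) *s
          (q (b_idx N (int n - int (ns j))) - w (b_idx N (int n - int (ns j))))))
        \<le> (\<Sum>j\<le>h. mn (A j t) * (CM * B))" .
    qed
    also have "\<dots> = \<Delta> * ((\<Sum>j\<le>h. mn (A j t)) * (CM * B))" by (simp add: sum_distrib_right)
    also have "\<dots> \<le> \<Delta> * (K * (CM * B))"
      using K[OF t] CM0 B0 Dpos by (intro mult_left_mono mult_right_mono) auto
    finally show "norm (Amul A ns h \<Delta> N \<mu> s q n - Amul A ns h \<Delta> N \<mu> s w n) \<le> \<Delta> * (K * CM) * B"
      by (simp add: mult.assoc)
  qed
qed

lemma Amul_cont:
  assumes N: "N > 0" and qc: "\<And>m. m \<in> {1..N} \<Longrightarrow> continuous_on S (q m)"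
  shows "continuous_on S (\<lambda>s. Amul A ns h \<Delta> N \<mu> s (\<lambda>m. q m s) n)"
  unfolding Amul_def
proof (rule cont_smult, rule continuous_on_sum, rule cont_mv)
  fix j assume j: "j \<in> {..h}"
  show "continuous_on S (\<lambda>s. A j ((s + real n - 1) * \<Delta>))"
  proof (rule continuous_on_compose2[OF Acont])
    show "continuous_on S (\<lambda>s. (s + real n - 1) * \<Delta>)" by (intro continuous_intros)
  qed (use j in auto)
  show "continuous_on S (\<lambda>s. \<mu> powi a_idx N (int n - int (ns j)) *s q (b_idx N (int n - int (ns j))) s)"
  proof (rule cont_smult)
    show "continuous_on S (q (b_idx N (int n - int (ns j))))" using qc b_idx_range[OF N] by blast
  qed
qed

lemma OE:
  assumes N: "N > 0"
  shows "\<exists>q. ode_sol A ns h \<Delta> N \<mu> v q"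
proof -
  obtain L where L0: "L \<ge> 0" and L: "\<And>(s::real) (n::nat) (q::nat \<Rightarrow> complex^'d) (w::nat \<Rightarrow> complex^'d) (B::real). s \<in> {0..1} \<Longrightarrow> n \<in> {1..N} \<Longrightarrow>
     (\<And>m. m \<in> {1..N} \<Longrightarrow> norm (q m - w m) \<le> B) \<Longrightarrow>
     norm (Amul A ns h \<Delta> N \<mu> s q n - Amul A ns h \<Delta> N \<mu> s w n) \<le> L * B"
    using Amul_lip[OF N] by blast
  have "\<exists>y. \<forall>i\<in>{1..N}. continuous_on {0..1} (y i) \<and> y i 0 = v i \<and>
     (\<forall>t\<in>{0..1}. (y i has_vector_derivative (\<lambda>y i s. Amul A ns h \<Delta> N \<mu> s (\<lambda>m. y m s) i) y i t) (at t within {0..1}))"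
  proof (rule GEN[where L=L])
    fix y :: "nat \<Rightarrow> real \<Rightarrow> complex^'d" and i
    assume "i \<in> {1..N}" and H: "\<And>j. j \<in> {1..N} \<Longrightarrow> continuous_on {0..1} (y j) \<and> y j 0 = v j"
    show "continuous_on {0..1} ((\<lambda>y i s. Amul A ns h \<Delta> N \<mu> s (\<lambda>m. y m s) i) y i)"
      using Amul_cont[OF N, of "{0..1}" y] H by simp
  next
    fix y w :: "nat \<Rightarrow> real \<Rightarrow> complex^'d" and i s B
    assume i: "i \<in> {1..N}" and s: "s \<in> {0..1}"
      and HB: "\<And>j u. j \<in> {1..N} \<Longrightarrow> u \<in> {0..s} \<Longrightarrow> norm (y j u - w j u) \<le> B"
    show "norm ((\<lambda>y i s. Amul A ns h \<Delta> N \<mu> s (\<lambda>m. y m s) i) y i s - (\<lambda>y i s. Amul A ns h \<Delta> N \<mu> s (\<lambda>m. y m s) i) w i s) \<le> L * B"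
      using L[OF s i, of "\<lambda>m. y m s" "\<lambda>m. w m s" B] HB s by simp
  qed (use L0 in auto)
  then obtain y where "\<forall>i\<in>{1..N}. continuous_on {0..1} (y i) \<and> y i 0 = v i \<and>
     (\<forall>t\<in>{0..1}. (y i has_vector_derivative Amul A ns h \<Delta> N \<mu> t (\<lambda>m. y m t) i) (at t within {0..1}))"
    by auto
  then have "ode_sol A ns h \<Delta> N \<mu> v y" unfolding ode_sol_def by blast
  then show ?thesis by blast
qed

lemma OU:
  assumes N: "N > 0" and q1: "ode_sol A ns h \<Delta> N \<mu> v q1" and q2: "ode_sol A ns h \<Delta> N \<mu> v q2"
    and n: "n \<in> {1..N}" and s: "s \<in> {0..1}"
  shows "q1 n s = q2 n s"
proof -
  obtain L where L0: "L \<ge> 0" and L: "\<And>(s::real) (n::nat) (q::nat \<Rightarrow> complex^'d) (w::nat \<Rightarrow> complex^'d) (B::real). s \<in> {0..1} \<Longrightarrow> n \<in> {1..N} \<Longrightarrow>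
     (\<And>m. m \<in> {1..N} \<Longrightarrow> norm (q m - w m) \<le> B) \<Longrightarrow>
     norm (Amul A ns h \<Delta> N \<mu> s q n - Amul A ns h \<Delta> N \<mu> s w n) \<le> L * B"
    using Amul_lip[OF N] by blast
  have d1: "\<And>m t. m \<in> {1..N} \<Longrightarrow> t \<in> {0..1} \<Longrightarrow> (q1 m has_vector_derivative Amul A ns h \<Delta> N \<mu> t (\<lambda>k. q1 k t) m) (at t within {0..1})"
    and i1: "\<And>m. m \<in> {1..N} \<Longrightarrow> q1 m 0 = v m"
    using q1 unfolding ode_sol_def by auto
  have d2: "\<And>m t. m \<in> {1..N} \<Longrightarrow> t \<in> {0..1} \<Longrightarrow> (q2 m has_vector_derivative Amul A ns h \<Delta> N \<mu> t (\<lambda>k. q2 k t) m) (at t within {0..1})"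
    and i2: "\<And>m. m \<in> {1..N} \<Longrightarrow> q2 m 0 = v m"
    using q2 unfolding ode_sol_def by auto
  have "(\<lambda>m t. q1 m t - q2 m t) n s = 0"
  proof (rule GU[where I="{1..N}" and a=0 and b=1 and L=L
        and D="\<lambda>m t. Amul A ns h \<Delta> N \<mu> t (\<lambda>k. q1 k t) m - Amul A ns h \<Delta> N \<mu> t (\<lambda>k. q2 k t) m"])
    fix i assume i: "i \<in> {1..N}"
    show "continuous_on {0..1} (\<lambda>t. q1 i t - q2 i t)"
      using d1[OF i] d2[OF i] by (intro continuous_intros deriv_cont_on) auto
    show "q1 i 0 - q2 i 0 = 0" using i1[OF i] i2[OF i] by simp
    fix t :: real assume t: "t \<in> {0..1}"
    show "((\<lambda>t. q1 i t - q2 i t) has_vector_derivative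
       Amul A ns h \<Delta> N \<mu> t (\<lambda>k. q1 k t) i - Amul A ns h \<Delta> N \<mu> t (\<lambda>k. q2 k t) i) (at t within {0..1})"
      using d1[OF i t] d2[OF i t] by (intro derivative_intros)
    fix B assume HB: "\<And>j u. j \<in> {1..N} \<Longrightarrow> u \<in> {0..t} \<Longrightarrow> norm (q1 j u - q2 j u) \<le> B"
    show "norm (Amul A ns h \<Delta> N \<mu> t (\<lambda>k. q1 k t) i - Amul A ns h \<Delta> N \<mu> t (\<lambda>k. q2 k t) i) \<le> L * B"
      using L[OF t i, of "\<lambda>k. q1 k t" "\<lambda>k. q2 k t" B] HB t by simp
  qed (use L0 n s in auto)
  then show ?thesis by simp
qed

lemma ode_q_eq:
  assumes N: "N > 0" and q: "ode_sol A ns h \<Delta> N \<mu> v q" and n: "n \<in> {1..N}" and s: "s \<in> {0..1}"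
  shows "ode_q A ns h \<Delta> N \<mu> v n s = q n s"
  unfolding ode_q_def
proof (rule the_equality)
  show "\<exists>q'. ode_sol A ns h \<Delta> N \<mu> v q' \<and> q' n s = q n s" using q by blast
  fix y assume "\<exists>q'. ode_sol A ns h \<Delta> N \<mu> v q' \<and> q' n s = y"
  then obtain q' where "ode_sol A ns h \<Delta> N \<mu> v q'" "q' n s = y" by blast
  then show "y = q n s" using OU[OF N _ q n s] by blast
qed

end


lemma idx_char:
  assumes N: "N > 0" and r: "0 \<le> r" "r < int N"
  shows "a_idx N (a * int N + r + 1) = a" "b_idx N (a * int N + r + 1) = nat r + 1"
  using N r by (simp_all add: a_idx_def b_idx_def)

lemma idx_decomp:
  assumes N: "N > 0"
  shows "k = a_idx N k * int N + int (b_idx N k)"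
proof -
  have "k - 1 = (k - 1) div int N * int N + (k - 1) mod int N" by simp
  moreover have "(k - 1) mod int N \<ge> 0" using N by simp
  ultimately show ?thesis unfolding a_idx_def b_idx_def by simp
qed

lemma idx_shift:
  assumes N: "N > 0"
  shows "a_idx N (k + m * int N) = a_idx N k + m" "b_idx N (k + m * int N) = b_idx N k"
proof -
  have bb: "b_idx N k \<in> {1..N}" using b_idx_range[OF N] .
  have k: "k + m * int N = (a_idx N k + m) * int N + (int (b_idx N k) - 1) + 1"
    using idx_decomp[OF N, of k] by (simp add: algebra_simps)
  show "a_idx N (k + m * int N) = a_idx N k + m" "b_idx N (k + m * int N) = b_idx N k"
    unfolding k using idx_char[OF N, of "int (b_idx N k) - 1" "a_idx N k + m"] bb by auto
qed

lemma idx_small: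
  assumes N: "N > 0" and k: "1 \<le> k" "k \<le> int N"
  shows "a_idx N k = 0" "b_idx N k = nat k"
  using idx_char[OF N, of "k - 1" 0] k by auto

lemma idx_nonpos:
  assumes N: "N > 0" and k: "k \<le> int N"
  shows "a_idx N k \<le> 0"
proof (rule ccontr)
  assume "\<not> a_idx N k \<le> 0"
  then have "a_idx N k \<ge> 1" by simp
  then have "a_idx N k * int N \<ge> 1 * int N" using N by (intro mult_right_mono) auto
  moreover have "b_idx N k \<ge> 1" using b_idx_range[OF N] by auto
  ultimately show False using idx_decomp[OF N, of k] k by linarith
qed

lemma idx_succ:
  assumes N: "N > 0"
  shows "b_idx N k < N \<Longrightarrow> a_idx N (k + 1) = a_idx N k \<and> b_idx N (k + 1) = b_idx N k + 1"
    and "b_idx N k = N \<Longrightarrow> a_idx N (k + 1) = a_idx N k + 1 \<and> b_idx N (k + 1) = 1"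
proof -
  have bb: "b_idx N k \<in> {1..N}" using b_idx_range[OF N] .
  assume lt: "b_idx N k < N"
  have k: "k + 1 = a_idx N k * int N + int (b_idx N k) + 1"
    using idx_decomp[OF N, of k] by simp
  show "a_idx N (k + 1) = a_idx N k \<and> b_idx N (k + 1) = b_idx N k + 1"
    unfolding k using idx_char[OF N, of "int (b_idx N k)" "a_idx N k"] bb lt by auto
next
  assume eq: "b_idx N k = N"
  have k: "k + 1 = (a_idx N k + 1) * int N + 0 + 1"
    using idx_decomp[OF N, of k] eq by (simp add: algebra_simps)
  show "a_idx N (k + 1) = a_idx N k + 1 \<and> b_idx N (k + 1) = 1"
    unfolding k using idx_char[OF N, of 0 "a_idx N k + 1"] N by auto
qed

lemma smult_assoc_vec: "a *s (b *s (x :: complex^'n)) = (a * b) *s x"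
  by (simp add: vec_eq_iff mult.assoc)

lemma smult_one_vec: "(1::complex) *s (x :: complex^'n) = x"
  by (simp add: vec_eq_iff)



locale psys = dsys +
  fixes N :: nat and \<mu> :: complex
  assumes Npos: "N > 0"
    and periodic: "\<And>j t. j \<le> h \<Longrightarrow> A j (t + real N * \<Delta>) = A j t"
    and mu_nz: "\<mu> \<noteq> 0"
begin

lemma periodic_nat: "j \<le> h \<Longrightarrow> A j (t + real m * (real N * \<Delta>)) = A j t"
proof (induction m arbitrary: t)
  case 0 then show ?case by simp
next
  case (Suc m)
  have "A j (t + real (Suc m) * (real N * \<Delta>)) = A j ((t + real m * (real N * \<Delta>)) + real N * \<Delta>)"
    by (simp add: algebra_simps)
  also have "\<dots> = A j (t + real m * (real N * \<Delta>))" using periodic Suc.prems by blast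
  finally show ?case using Suc by simp
qed

lemma periodic_int: "j \<le> h \<Longrightarrow> A j (t + real_of_int m * (real N * \<Delta>)) = A j t"
proof (cases "m \<ge> 0")
  case True
  assume j: "j \<le> h"
  then show ?thesis using periodic_nat[OF j, of t "nat m"] True by simp
next
  case False
  assume j: "j \<le> h"
  have "A j t = A j ((t + real_of_int m * (real N * \<Delta>)) + real (nat (- m)) * (real N * \<Delta>))"
    using False by (simp add: algebra_simps)
  also have "\<dots> = A j (t + real_of_int m * (real N * \<Delta>))" by (rule periodic_nat[OF j])
  finally show ?thesis by simp
qed

lemma shift_sol:
  assumes xs: "dde_sol A ns h \<Delta> 0 \<phi> x"
    and H: "\<And>\<theta>. \<theta> \<in> {- tau ns \<Delta> h..0} \<Longrightarrow> dde_x A ns h \<Delta> 0 \<phi> (real N * \<Delta> + \<theta>) = \<mu> *s \<phi> \<theta>"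
    and t: "t \<ge> - tau ns \<Delta> h"
  shows "x (t + real N * \<Delta>) = \<mu> *s x t"
proof -
  note X = dde_sol_D[OF xs]
  have ND: "real N * \<Delta> \<ge> 0" using Dpos by simp
  define y where "y t = x (t + real N * \<Delta>)" for t
  define z where "z t = \<mu> *s x t" for t
  have ys: "dde_sol A ns h \<Delta> 0 (\<lambda>\<theta>. \<mu> *s \<phi> \<theta>) y"
    unfolding dde_sol_def
  proof (intro conjI ballI allI impI)
    show "continuous_on {0 - tau ns \<Delta> h..} y" unfolding y_def
    proof (rule continuous_on_compose2[OF X(1)])
      show "continuous_on {0 - tau ns \<Delta> h..} (\<lambda>t. t + real N * \<Delta>)" by (intro continuous_intros)
    qed (use ND in auto)
    fix t assume t: "t \<in> {0 - tau ns \<Delta> h..0}"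
    then have "y t = dde_x A ns h \<Delta> 0 \<phi> (real N * \<Delta> + t)"
      using dde_x_eq[OF xs, of "real N * \<Delta> + t"] ND unfolding y_def by (simp add: add.commute)
    also have "\<dots> = \<mu> *s \<phi> t" using H t by simp
    finally show "y t = \<mu> *s \<phi> (t - 0)" by simp
  next
    fix t :: real assume t: "t \<ge> 0"
    have d: "(x has_vector_derivative RHS x (t + real N * \<Delta>)) (at (t + real N * \<Delta>) within (\<lambda>t. t + real N * \<Delta>) ` {0..})"
      by (rule has_vector_derivative_within_subset[OF X(3)]) (use t ND in auto)
    have "((x \<circ> (\<lambda>t. t + real N * \<Delta>)) has_vector_derivative 1 *\<^sub>R RHS x (t + real N * \<Delta>)) (at t within {0..})"
      by (rule vector_diff_chain_within[OF _ d]) (auto intro!: derivative_eq_intros)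
    moreover have "RHS x (t + real N * \<Delta>) = (\<Sum>j\<le>h. cmat (A j t) *v y (t - tau ns \<Delta> j))"
      unfolding RHS_def y_def
    proof (rule sum.cong[OF refl])
      fix j assume "j \<in> {..h}"
      then show "cmat (A j (t + real N * \<Delta>)) *v x (t + real N * \<Delta> - tau ns \<Delta> j) =
            cmat (A j t) *v x (t - tau ns \<Delta> j + real N * \<Delta>)"
        using periodic[of j t] by (simp add: algebra_simps)
    qed
    ultimately show "(y has_vector_derivative (\<Sum>j\<le>h. cmat (A j t) *v y (t - tau ns \<Delta> j))) (at t within {0..})"
      by (simp add: y_def[abs_def] o_def)
  qed
  have zs: "dde_sol A ns h \<Delta> 0 (\<lambda>\<theta>. \<mu> *s \<phi> \<theta>) z"
    unfolding dde_sol_def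
  proof (intro conjI ballI allI impI)
    show "continuous_on {0 - tau ns \<Delta> h..} z" unfolding z_def using X(1) by (intro cont_smult) simp
    fix t assume "t \<in> {0 - tau ns \<Delta> h..0}"
    then show "z t = \<mu> *s \<phi> (t - 0)" using X(2) by (simp add: z_def)
  next
    fix t :: real assume t: "t \<ge> 0"
    have "(z has_vector_derivative \<mu> *s RHS x t) (at t within {0..})"
      unfolding z_def by (rule bounded_linear.has_vector_derivative[OF bounded_linear_smult_vec X(3)[OF t]])
    moreover have "\<mu> *s RHS x t = (\<Sum>j\<le>h. cmat (A j t) *v z (t - tau ns \<Delta> j))"
      by (simp add: RHS_def z_def vector_scalar_commute sum_cmul)
    ultimately show "(z has_vector_derivative (\<Sum>j\<le>h. cmat (A j t) *v z (t - tau ns \<Delta> j))) (at t within {0..})"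
      by simp
  qed
  have "y t = z t" by (rule DU[OF ys zs t])
  then show ?thesis by (simp add: y_def z_def)
qed

end


context psys begin

lemma part1:
  assumes phi: "continuous_on {- tau ns \<Delta> h..0} \<phi>"
    and H: "\<forall>\<theta>\<in>{- tau ns \<Delta> h..0}. dde_x A ns h \<Delta> 0 \<phi> (real N * \<Delta> + \<theta>) = \<mu> *s \<phi> \<theta>"
    and n: "n \<in> {1..N}"
  shows "charN A ns h \<Delta> N \<mu> (\<lambda>m. dde_x A ns h \<Delta> 0 \<phi> ((real m - 1) * \<Delta>)) n = 0"
proof -
  obtain x where xs: "dde_sol A ns h \<Delta> 0 \<phi> x" using DE[OF phi] by blast
  note X = dde_sol_D[OF xs]
  have th: "tau ns \<Delta> h \<ge> 0" by (rule tau_nonneg)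
  have ND: "real N * \<Delta> \<ge> 0" using Dpos by simp
  have dx: "\<And>t. t \<ge> - tau ns \<Delta> h \<Longrightarrow> dde_x A ns h \<Delta> 0 \<phi> t = x t" by (rule dde_x_eq[OF xs])
  have sh: "\<And>t. t \<ge> - tau ns \<Delta> h \<Longrightarrow> x (t + real N * \<Delta>) = \<mu> *s x t"
    by (rule shift_sol[OF xs]) (use H in auto)
  have iter: "x (t + real m * (real N * \<Delta>)) = \<mu>^m *s x t" if t: "t \<ge> - tau ns \<Delta> h" for t m
  proof (induction m)
    case 0 then show ?case by (simp add: smult_one_vec)
  next
    case (Suc m)
    have "x (t + real (Suc m) * (real N * \<Delta>)) = x ((t + real m * (real N * \<Delta>)) + real N * \<Delta>)"
      by (simp add: algebra_simps)
    also have "\<dots> = \<mu> *s x (t + real m * (real N * \<Delta>))"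
      using t ND by (intro sh) (simp add: add_increasing2)
    finally show ?case using Suc by (simp add: smult_assoc_vec)
  qed
  have key: "x ((s + real_of_int k - 1) * \<Delta>) = \<mu> powi a_idx N k *s x ((s + real (b_idx N k) - 1) * \<Delta>)"
    if s: "s \<ge> 0" and k1: "(s + real_of_int k - 1) * \<Delta> \<ge> - tau ns \<Delta> h" and kN: "k \<le> int N" for s k
  proof -
    define a where "a = a_idx N k"
    define b where "b = b_idx N k"
    have a0: "a \<le> 0" unfolding a_def by (rule idx_nonpos[OF Npos kN])
    define m where "m = nat (- a)"
    have kd: "k = a * int N + int b" unfolding a_def b_def by (rule idx_decomp[OF Npos])
    have "(s + real_of_int k - 1) * \<Delta> + real m * (real N * \<Delta>) = (s + real b - 1) * \<Delta>"
    proof -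
      have "real m = - real_of_int a" using a0 unfolding m_def by simp
      moreover have "real_of_int k = real_of_int a * real N + real b" using kd by simp
      ultimately show ?thesis by (simp add: algebra_simps)
    qed
    then have e: "x ((s + real b - 1) * \<Delta>) = \<mu>^m *s x ((s + real_of_int k - 1) * \<Delta>)"
      using iter[OF k1, of m] by simp
    have pw: "\<mu> powi a * \<mu> ^ m = 1"
    proof -
      have "\<mu> ^ m = \<mu> powi (int m)" by simp
      then have "\<mu> powi a * \<mu> ^ m = \<mu> powi (a + int m)" using mu_nz by (simp add: power_int_add)
      also have "a + int m = 0" using a0 unfolding m_def by simp
      finally show ?thesis by simp
    qed
    show ?thesis unfolding a_def[symmetric] b_def[symmetric] e smult_assoc_vec pw smult_one_vec ..
  qed
  define v where "v m = dde_x A ns h \<Delta> 0 \<phi> ((real m - 1) * \<Delta>)" for m :: nat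
  define q where "q m s = x ((s + real m - 1) * \<Delta>)" for m :: nat and s :: real
  have qs: "ode_sol A ns h \<Delta> N \<mu> v q"
    unfolding ode_sol_def
  proof (intro ballI conjI)
    fix n assume n: "n \<in> {1..N}"
    have nn: "(real n - 1) * \<Delta> \<ge> 0" using n Dpos by (intro mult_nonneg_nonneg) auto
    show "q n 0 = v n" unfolding q_def v_def using nn th by (subst dx) auto
    fix s :: real assume s: "s \<in> {0..1}"
    define f where "f s = (s + real n - 1) * \<Delta>" for s
    have fs: "f s \<ge> 0" using s n Dpos unfolding f_def by auto
    have fd: "(f has_vector_derivative \<Delta>) (at s within {0..1})"
      unfolding f_def by (auto intro!: derivative_eq_intros)
    have xd: "(x has_vector_derivative RHS x (f s)) (at (f s) within f ` {0..1})"
      by (rule has_vector_derivative_within_subset[OF X(3)[OF fs]]) (use n Dpos in \<open>auto simp: f_def\<close>)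
    have "((x \<circ> f) has_vector_derivative \<Delta> *\<^sub>R RHS x (f s)) (at s within {0..1})"
      by (rule vector_diff_chain_within[OF fd xd])
    moreover have "\<Delta> *\<^sub>R RHS x (f s) = Amul A ns h \<Delta> N \<mu> s (\<lambda>m. q m s) n"
      unfolding Amul_def scaleR_smult_vec RHS_def
    proof (rule arg_cong2[where f="\<lambda>c x. c *s x", OF refl], rule sum.cong[OF refl])
      fix j assume j: "j \<in> {..h}"
      define k where "k = int n - int (ns j)"
      have "x (f s - tau ns \<Delta> j) = x ((s + real_of_int k - 1) * \<Delta>)"
        unfolding f_def k_def tau_def by (simp add: algebra_simps)
      also have "\<dots> = \<mu> powi a_idx N k *s x ((s + real (b_idx N k) - 1) * \<Delta>)"
      proof (rule key)
        show "s \<ge> 0" using s by simp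
        have "ns j \<le> ns h" using ns_le j by simp
        then have "real_of_int k - 1 \<ge> - real (ns h)" using n unfolding k_def by simp
        then have "(s + real_of_int k - 1) * \<Delta> \<ge> (- real (ns h)) * \<Delta>"
          using s Dpos by (intro mult_right_mono) auto
        then show "(s + real_of_int k - 1) * \<Delta> \<ge> - tau ns \<Delta> h" by (simp add: tau_def)
        show "k \<le> int N" using n unfolding k_def by simp
      qed
      finally show "cmat (A j (f s)) *v x (f s - tau ns \<Delta> j) =
         cmat (A j ((s + real n - 1) * \<Delta>)) *v (\<mu> powi a_idx N (int n - int (ns j)) *s q (b_idx N (int n - int (ns j))) s)"
        by (simp add: f_def q_def k_def)
    qed
    ultimately show "(q n has_vector_derivative Amul A ns h \<Delta> N \<mu> s (\<lambda>m. q m s) n) (at s within {0..1})"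
      by (simp add: q_def[abs_def] f_def[abs_def] o_def)
  qed
  have oq: "ode_q A ns h \<Delta> N \<mu> v n 1 = x (real n * \<Delta>)"
    using ode_q_eq[OF Npos qs n, of 1] by (simp add: q_def)
  have "Bmul N \<mu> v n = x (real n * \<Delta>)"
  proof (cases "n < N")
    case True
    have "real n * \<Delta> \<ge> 0" using Dpos by simp
    then have "- tau ns \<Delta> h \<le> real n * \<Delta>" using th by linarith
    then show ?thesis unfolding Bmul_def v_def using dx[of "real n * \<Delta>"] True by simp
  next
    case False
    then have nN: "n = N" using n by simp
    have "Bmul N \<mu> v n = \<mu> *s x 0" unfolding Bmul_def v_def using False dx[of 0] th by simp
    also have "\<dots> = x (0 + real N * \<Delta>)" using sh[of 0] th by simp
    finally show ?thesis using nN by simp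
  qed
  then show ?thesis unfolding charN_def v_def[symmetric] oq by simp
qed

end


context psys begin

lemma floor_lemma:
  fixes s :: real and k :: int
  assumes "0 \<le> s" "s < 1"
  shows "\<lfloor>real_of_int k - 1 + s\<rfloor> = k - 1"
  using assms by (simp add: floor_eq_iff)

lemma part2:
  assumes cN: "\<forall>n\<in>{1..N}. charN A ns h \<Delta> N \<mu> v n = 0"
  shows "continuous_on {- tau ns \<Delta> h..0} (phi_hat A ns h \<Delta> N \<mu> v) \<and>
    (\<forall>\<theta>\<in>{- tau ns \<Delta> h..0}. dde_x A ns h \<Delta> 0 (phi_hat A ns h \<Delta> N \<mu> v) (real N * \<Delta> + \<theta>) =
        \<mu> *s phi_hat A ns h \<Delta> N \<mu> v \<theta>)"
proof -
  have th: "tau ns \<Delta> h \<ge> 0" by (rule tau_nonneg)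
  obtain q where qs: "ode_sol A ns h \<Delta> N \<mu> v q" using OE[OF Npos] by blast
  define Q where "Q = ode_q A ns h \<Delta> N \<mu> v"
  have Qq: "\<And>n s. n \<in> {1..N} \<Longrightarrow> s \<in> {0..1} \<Longrightarrow> Q n s = q n s"
    unfolding Q_def by (rule ode_q_eq[OF Npos qs])
  have q0: "\<And>n. n \<in> {1..N} \<Longrightarrow> q n 0 = v n" and
    qd: "\<And>n s. n \<in> {1..N} \<Longrightarrow> s \<in> {0..1} \<Longrightarrow>
           (q n has_vector_derivative Amul A ns h \<Delta> N \<mu> s (\<lambda>m. q m s) n) (at s within {0..1})"
    using qs unfolding ode_sol_def by auto
  have Q1: "\<And>n. n \<in> {1..N} \<Longrightarrow> Q n 1 = Bmul N \<mu> v n"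
    using cN unfolding charN_def Q_def by simp
  define G where "G k s = \<mu> powi a_idx N k *s Q (b_idx N k) s" for k s
  have Gstep: "G k 1 = G (k + 1) 0" for k
  proof (cases "b_idx N k < N")
    case True
    have S: "a_idx N (k + 1) = a_idx N k" "b_idx N (k + 1) = b_idx N k + 1" using idx_succ(1)[OF Npos True] by auto
    have bb: "b_idx N k \<in> {1..N}" "b_idx N k + 1 \<in> {1..N}" using b_idx_range[OF Npos, of k] True by auto
    show ?thesis unfolding G_def S using Q1[OF bb(1)] Qq[OF bb(2)] q0[OF bb(2)] True
      by (simp add: Bmul_def)
  next
    case False
    then have eq: "b_idx N k = N" using b_idx_range[OF Npos, of k] by simp
    have S: "a_idx N (k + 1) = a_idx N k + 1" "b_idx N (k + 1) = 1" using idx_succ(2)[OF Npos eq] by auto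
    have bb: "N \<in> {1..N}" "1 \<in> {1..N}" using Npos by auto
    have "G k 1 = \<mu> powi a_idx N k *s (\<mu> *s v 1)" unfolding G_def eq using Q1[OF bb(1)] by (simp add: Bmul_def)
    also have "\<dots> = \<mu> powi (a_idx N k + 1) *s v 1"
      using mu_nz by (simp add: smult_assoc_vec power_int_add_1)
    also have "\<dots> = G (k + 1) 0" unfolding G_def S using Qq[OF bb(2)] q0[OF bb(2)] by simp
    finally show ?thesis .
  qed
  have Gshift: "G (k + int N) s = \<mu> *s G k s" for k s
  proof -
    have "a_idx N (k + 1 * int N) = a_idx N k + 1" "b_idx N (k + 1 * int N) = b_idx N k"
      using idx_shift[OF Npos, of k 1] by auto
    then show ?thesis unfolding G_def using mu_nz by (simp add: smult_assoc_vec power_int_add_1 mult.commute)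
  qed
  define Y where "Y t = G (\<lfloor>t / \<Delta>\<rfloor> + 1) (t / \<Delta> - real_of_int \<lfloor>t / \<Delta>\<rfloor>)" for t
  have YG: "Y ((real_of_int k - 1 + s) * \<Delta>) = G k s" if s: "s \<in> {0..1}" for k s
  proof (cases "s < 1")
    case True
    have fl: "\<lfloor>real_of_int k - 1 + s\<rfloor> = k - 1" using s True by (intro floor_lemma) auto
    show ?thesis unfolding Y_def using Dpos fl by simp
  next
    case False
    then have s1: "s = 1" using s by simp
    have "Y ((real_of_int k - 1 + s) * \<Delta>) = G (k + 1) 0" unfolding Y_def s1 using Dpos by simp
    then show ?thesis using Gstep s1 by simp
  qed
  have Yrep: "\<And>t. Y t = G (\<lfloor>t / \<Delta>\<rfloor> + 1) (t / \<Delta> - real_of_int \<lfloor>t / \<Delta>\<rfloor>)" by (simp add: Y_def)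
  have Yper: "Y (real N * \<Delta> + t) = \<mu> *s Y t" for t
  proof -
    define f where "f = \<lfloor>t / \<Delta>\<rfloor>"
    define s where "s = t / \<Delta> - real_of_int f"
    have s: "s \<in> {0..1}" unfolding s_def f_def by (auto simp: floor_le_iff) linarith
    have t: "t = (real_of_int (f + 1) - 1 + s) * \<Delta>" unfolding s_def using Dpos by simp
    have t2: "real N * \<Delta> + t = (real_of_int (f + 1 + int N) - 1 + s) * \<Delta>"
      unfolding t by (simp add: algebra_simps)
    show ?thesis unfolding t2 YG[OF s] Gshift unfolding t YG[OF s] ..
  qed
  have piece: "(Y has_vector_derivative RHS Y t) (at t within {real_of_int k * \<Delta>..real_of_int (k + 1) * \<Delta>})"
    if t: "t \<in> {real_of_int k * \<Delta>..real_of_int (k + 1) * \<Delta>}" for k t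
  proof -
    define K where "K = k + 1"
    define a where "a = a_idx N K"
    define b where "b = b_idx N K"
    have bN: "b \<in> {1..N}" unfolding b_def by (rule b_idx_range[OF Npos])
    define g where "g u = u / \<Delta> - real_of_int k" for u
    have gI: "g u \<in> {0..1}" if "u \<in> {real_of_int k * \<Delta>..real_of_int (k + 1) * \<Delta>}" for u
      using that Dpos unfolding g_def by (auto simp: field_simps)
    define s where "s = g t"
    have s: "s \<in> {0..1}" unfolding s_def using gI[OF t] .
    have Yeq: "Y u = \<mu> powi a *s q b (g u)" if "u \<in> {real_of_int k * \<Delta>..real_of_int (k + 1) * \<Delta>}" for u
    proof -
      have e: "u = (real_of_int K - 1 + g u) * \<Delta>" unfolding g_def K_def using Dpos by simp
      have "Y u = G K (g u)" by (rule trans[OF arg_cong[OF e, of Y] YG[OF gI[OF that]]])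
      also have "\<dots> = \<mu> powi a *s q b (g u)" unfolding G_def a_def b_def using Qq[OF _ gI[OF that]] bN b_def by simp
      finally show ?thesis .
    qed
    have gd: "(g has_vector_derivative (1 / \<Delta>)) (at t within {real_of_int k * \<Delta>..real_of_int (k + 1) * \<Delta>})"
      unfolding g_def by (auto intro!: derivative_eq_intros simp: divide_inverse)
    have qd': "(q b has_vector_derivative Amul A ns h \<Delta> N \<mu> s (\<lambda>m. q m s) b)
        (at (g t) within g ` {real_of_int k * \<Delta>..real_of_int (k + 1) * \<Delta>})"
    proof -
      have gts: "g t = s" by (simp add: s_def)
      show ?thesis unfolding gts
        by (rule has_vector_derivative_within_subset[OF qd[OF bN s]]) (use gI in auto)
    qed
    have "((q b \<circ> g) has_vector_derivative (1 / \<Delta>) *\<^sub>R Amul A ns h \<Delta> N \<mu> s (\<lambda>m. q m s) b)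
        (at t within {real_of_int k * \<Delta>..real_of_int (k + 1) * \<Delta>})"
      by (rule vector_diff_chain_within[OF gd qd'])
    then have d1: "((\<lambda>u. \<mu> powi a *s q b (g u)) has_vector_derivative
        \<mu> powi a *s ((1 / \<Delta>) *\<^sub>R Amul A ns h \<Delta> N \<mu> s (\<lambda>m. q m s) b))
        (at t within {real_of_int k * \<Delta>..real_of_int (k + 1) * \<Delta>})"
      unfolding o_def by (rule bounded_linear.has_vector_derivative[OF bounded_linear_smult_vec])
    have val: "\<mu> powi a *s ((1 / \<Delta>) *\<^sub>R Amul A ns h \<Delta> N \<mu> s (\<lambda>m. q m s) b) = RHS Y t"
    proof -
      have c1: "(1 / \<Delta>) *\<^sub>R (complex_of_real \<Delta> *s V) = V" for V :: "complex^'d"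
        using Dpos by (simp add: scaleR_smult_vec smult_assoc_vec smult_one_vec flip: of_real_mult)
      have "\<mu> powi a *s ((1 / \<Delta>) *\<^sub>R Amul A ns h \<Delta> N \<mu> s (\<lambda>m. q m s) b) =
        \<mu> powi a *s (\<Sum>j\<le>h. cmat (A j ((s + real b - 1) * \<Delta>)) *v
          (\<mu> powi a_idx N (int b - int (ns j)) *s q (b_idx N (int b - int (ns j))) s))"
        unfolding Amul_def c1 ..
      also have "\<dots> = (\<Sum>j\<le>h. cmat (A j ((s + real b - 1) * \<Delta>)) *v
          (\<mu> powi a *s (\<mu> powi a_idx N (int b - int (ns j)) *s q (b_idx N (int b - int (ns j))) s)))"
        by (simp add: vector_scalar_commute vec.scale_sum_right smult_assoc_vec del: sum_cmul)
      also have "\<dots> = RHS Y t"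
        unfolding RHS_def
      proof (rule sum.cong[OF refl])
        fix j assume j: "j \<in> {..h}"
        have Kd: "K = a * int N + int b" unfolding a_def b_def by (rule idx_decomp[OF Npos])
        have tK: "t = (s + real_of_int K - 1) * \<Delta>" unfolding s_def g_def K_def using Dpos by simp
        have A_eq: "A j ((s + real b - 1) * \<Delta>) = A j t"
        proof -
          have "t = (s + real b - 1) * \<Delta> + real_of_int a * (real N * \<Delta>)"
            unfolding tK using Kd by (simp add: algebra_simps)
          then show ?thesis using periodic_int[of j "(s + real b - 1) * \<Delta>" a] j by simp
        qed
        define k' where "k' = int b - int (ns j)"
        have sh: "K - int (ns j) = k' + a * int N" unfolding k'_def using Kd by simp
        have Ysh: "Y (t - tau ns \<Delta> j) = G (K - int (ns j)) s"
        proof -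
          have "t - tau ns \<Delta> j = (real_of_int (K - int (ns j)) - 1 + s) * \<Delta>"
            unfolding tK tau_def by (simp add: algebra_simps)
          then show ?thesis using YG[OF s, of "K - int (ns j)"] by simp
        qed
        have bk: "b_idx N k' \<in> {1..N}" by (rule b_idx_range[OF Npos])
        have "G (K - int (ns j)) s = \<mu> powi (a_idx N k' + a) *s q (b_idx N k') s"
          unfolding G_def sh idx_shift[OF Npos] using Qq[OF bk s] by simp
        also have "\<dots> = \<mu> powi a *s (\<mu> powi a_idx N k' *s q (b_idx N k') s)"
          using mu_nz by (simp add: smult_assoc_vec power_int_add mult.commute)
        finally show "cmat (A j ((s + real b - 1) * \<Delta>)) *v
          (\<mu> powi a *s (\<mu> powi a_idx N (int b - int (ns j)) *s q (b_idx N (int b - int (ns j))) s)) =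
          cmat (A j t) *v Y (t - tau ns \<Delta> j)"
          unfolding A_eq Ysh k'_def by simp
      qed
      finally show ?thesis .
    qed
    show ?thesis
      by (rule has_vector_derivative_transform[OF t _ d1[unfolded val]]) (use Yeq in auto)
  qed
  have Yder: "(Y has_vector_derivative RHS Y t) (at t)" for t
  proof -
    define k where "k = \<lfloor>t / \<Delta>\<rfloor>"
    have kl: "real_of_int k * \<Delta> \<le> t" unfolding k_def using Dpos
      by (metis floor_divide_lower)
    have ku: "t < real_of_int (k + 1) * \<Delta>" unfolding k_def using Dpos
      by (metis floor_divide_upper of_int_add of_int_1)
    show ?thesis
    proof (cases "t = real_of_int k * \<Delta>")
      case True
      have p1: "(Y has_vector_derivative RHS Y t) (at t within {real_of_int (k - 1) * \<Delta>..real_of_int (k - 1 + 1) * \<Delta>})"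
        by (rule piece) (use True Dpos in \<open>auto simp: algebra_simps\<close>)
      have p2: "(Y has_vector_derivative RHS Y t) (at t within {real_of_int k * \<Delta>..real_of_int (k + 1) * \<Delta>})"
        by (rule piece) (use kl ku in auto)
      have U: "{real_of_int (k - 1) * \<Delta>..real_of_int (k - 1 + 1) * \<Delta>} \<union> {real_of_int k * \<Delta>..real_of_int (k + 1) * \<Delta>}
             = {real_of_int (k - 1) * \<Delta>..real_of_int (k + 1) * \<Delta>}"
        using Dpos by (auto simp: algebra_simps)
      have "(Y has_vector_derivative RHS Y t) (at t within {real_of_int (k - 1) * \<Delta>..real_of_int (k + 1) * \<Delta>})"
        using hvd_Un[OF p1 p2] unfolding U .
      moreover have "at t within {real_of_int (k - 1) * \<Delta>..real_of_int (k + 1) * \<Delta>} = at t"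
        by (rule at_within_Icc_at) (use True Dpos in \<open>auto simp: algebra_simps\<close>)
      ultimately show ?thesis by simp
    next
      case False
      have p2: "(Y has_vector_derivative RHS Y t) (at t within {real_of_int k * \<Delta>..real_of_int (k + 1) * \<Delta>})"
        by (rule piece) (use kl ku in auto)
      moreover have "at t within {real_of_int k * \<Delta>..real_of_int (k + 1) * \<Delta>} = at t"
        by (rule at_within_Icc_at) (use False kl ku in auto)
      ultimately show ?thesis by simp
    qed
  qed
  have Ycont: "continuous_on UNIV Y"
    using Yder has_vector_derivative_continuous continuous_at_imp_continuous_on by blast
  define \<phi> where "\<phi> = phi_hat A ns h \<Delta> N \<mu> v"
  have phiY: "\<phi> t = Y t" if t: "t \<in> {- tau ns \<Delta> h..0}" for t
  proof (cases "t = - tau ns \<Delta> h")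
    case True
    define n where "n = 1 - int (ns h)"
    have "\<phi> t = G n (t / \<Delta> - real_of_int (n - 1))"
      unfolding \<phi>_def phi_hat_def G_def Q_def n_def using True by (simp add: Let_def)
    also have "t / \<Delta> - real_of_int (n - 1) = 0" unfolding n_def True tau_def using Dpos by simp
    also have "G n 0 = Y ((real_of_int n - 1 + 0) * \<Delta>)" using YG[of 0 n] by simp
    also have "(real_of_int n - 1 + 0) * \<Delta> = t" unfolding n_def True tau_def by (simp add: algebra_simps)
    finally show ?thesis .
  next
    case False
    define n where "n = \<lceil>t / \<Delta>\<rceil>"
    define s where "s = t / \<Delta> - real_of_int (n - 1)"
    have s: "s \<in> {0..1}" unfolding s_def n_def
      by (auto simp: algebra_simps) linarith+
    have "\<phi> t = G n s"
      unfolding \<phi>_def phi_hat_def G_def Q_def n_def s_def using False by (simp add: Let_def)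
    also have "\<dots> = Y ((real_of_int n - 1 + s) * \<Delta>)" using YG[OF s] by simp
    also have "(real_of_int n - 1 + s) * \<Delta> = t" unfolding s_def using Dpos by simp
    finally show ?thesis .
  qed
  have Ysol: "dde_sol A ns h \<Delta> 0 \<phi> Y"
    unfolding dde_sol_def
  proof (intro conjI ballI allI impI)
    show "continuous_on {0 - tau ns \<Delta> h..} Y" using Ycont by (rule continuous_on_subset) simp
    fix t assume "t \<in> {0 - tau ns \<Delta> h..0}"
    then show "Y t = \<phi> (t - 0)" using phiY by simp
  next
    fix t :: real assume "t \<ge> 0"
    show "(Y has_vector_derivative (\<Sum>j\<le>h. cmat (A j t) *v Y (t - tau ns \<Delta> j))) (at t within {0..})"
      using has_vector_derivative_at_within[OF Yder[of t]] by (simp add: RHS_def)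
  qed
  show ?thesis
  proof (intro conjI ballI)
    show "continuous_on {- tau ns \<Delta> h..0} (phi_hat A ns h \<Delta> N \<mu> v)"
      unfolding \<phi>_def[symmetric]
      by (rule continuous_on_eq[OF continuous_on_subset[OF Ycont]]) (use phiY in auto)
    fix \<theta> assume \<theta>: "\<theta> \<in> {- tau ns \<Delta> h..0}"
    have "real N * \<Delta> + \<theta> \<ge> - tau ns \<Delta> h" using \<theta> Dpos by (simp add: add_increasing)
    then have "dde_x A ns h \<Delta> 0 \<phi> (real N * \<Delta> + \<theta>) = Y (real N * \<Delta> + \<theta>)"
      by (rule dde_x_eq[OF Ysol])
    also have "\<dots> = \<mu> *s \<phi> \<theta>" using Yper phiY[OF \<theta>] by simp
    finally show "dde_x A ns h \<Delta> 0 (phi_hat A ns h \<Delta> N \<mu> v) (real N * \<Delta> + \<theta>) = \<mu> *s phi_hat A ns h \<Delta> N \<mu> v \<theta>"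
      unfolding \<phi>_def .
  qed
qed

end

theorem theorem2p2:
  fixes A :: "nat \<Rightarrow> real \<Rightarrow> real^'d^'d"
    and ns :: "nat \<Rightarrow> nat" and h N :: nat and \<Delta> :: real and \<mu> :: complex
  assumes Delta_pos: "\<Delta> > 0"
    and N_pos: "N > 0"
    and ns0: "ns 0 = 0"
    and ns_mono: "\<And>j. 1 \<le> j \<Longrightarrow> j < h \<Longrightarrow> ns j < ns (Suc j)"
    and smooth: "\<And>j. j \<le> h \<Longrightarrow> smooth_fun (A j)"
    and periodic: "\<And>j t. j \<le> h \<Longrightarrow> A j (t + real N * \<Delta>) = A j t"
    and mu_nz: "\<mu> \<noteq> 0"
  shows
    "(\<forall>\<phi> :: real \<Rightarrow> complex^'d.
        continuous_on {- tau ns \<Delta> h..0} \<phi> \<longrightarrow>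
        (\<exists>\<theta>\<in>{- tau ns \<Delta> h..0}. \<phi> \<theta> \<noteq> 0) \<longrightarrow>
        (\<forall>\<theta>\<in>{- tau ns \<Delta> h..0}. dde_x A ns h \<Delta> 0 \<phi> (real N * \<Delta> + \<theta>) = \<mu> *s \<phi> \<theta>) \<longrightarrow>
        (\<forall>n\<in>{1..N}. charN A ns h \<Delta> N \<mu>
            (\<lambda>m. dde_x A ns h \<Delta> 0 \<phi> ((real m - 1) * \<Delta>)) n = 0))
     \<and>
     (\<forall>v :: nat \<Rightarrow> complex^'d.
        (\<exists>n\<in>{1..N}. v n \<noteq> 0) \<longrightarrow>
        (\<forall>n\<in>{1..N}. charN A ns h \<Delta> N \<mu> v n = 0) \<longrightarrow>
        (let \<phi> = phi_hat A ns h \<Delta> N \<mu> v in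
           continuous_on {- tau ns \<Delta> h..0} \<phi> \<and>
           (\<forall>\<theta>\<in>{- tau ns \<Delta> h..0}. dde_x A ns h \<Delta> 0 \<phi> (real N * \<Delta> + \<theta>) = \<mu> *s \<phi> \<theta>)))"
proof -
  interpret psys A ns h \<Delta> N \<mu>
  proof (unfold_locales)
    show "\<And>j. j \<le> h \<Longrightarrow> continuous_on UNIV (A j)" using smooth smooth_cont by blast
  qed (use Delta_pos ns0 ns_mono periodic N_pos mu_nz in auto)
  show ?thesis
  proof (intro conjI allI impI ballI)
    fix \<phi> :: "real \<Rightarrow> complex^'d" and n
    assume c: "continuous_on {- tau ns \<Delta> h..0} \<phi>"
      and H: "\<forall>\<theta>\<in>{- tau ns \<Delta> h..0}. dde_x A ns h \<Delta> 0 \<phi> (real N * \<Delta> + \<theta>) = \<mu> *s \<phi> \<theta>"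
      and n: "n \<in> {1..N}"
    show "charN A ns h \<Delta> N \<mu> (\<lambda>m. dde_x A ns h \<Delta> 0 \<phi> ((real m - 1) * \<Delta>)) n = 0"
      by (rule part1[OF c H n])
  next
    fix v :: "nat \<Rightarrow> complex^'d"
    assume cN: "\<forall>n\<in>{1..N}. charN A ns h \<Delta> N \<mu> v n = 0"
    show "let \<phi> = phi_hat A ns h \<Delta> N \<mu> v in
           continuous_on {- tau ns \<Delta> h..0} \<phi> \<and>
           (\<forall>\<theta>\<in>{- tau ns \<Delta> h..0}. dde_x A ns h \<Delta> 0 \<phi> (real N * \<Delta> + \<theta>) = \<mu> *s \<phi> \<theta>)"
      unfolding Let_def by (rule part2[OF cN])
  qed
qed

end
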